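(* Let $A\in\mathbb{R}^{m\times n}$, $B\in\mathbb{R}^{p\times n}$ with $\mathrm{rank}(B)=p\le n$, $b\in\mathbb{R}^m$, $d\in\mathbb{R}^p$, and suppose the polyhedral convex set $D:=\{x\in\mathbb{R}^n\mid Ax\ge b,\ Bx=d\}$ is nonempty. Fix $x\in\mathbb{R}^n$, and let $I(x)$, $\mathcal{D}(x)$ and $\mathcal{P}(x)$ be as defined in the context. Define \[ P_0:=I_n-[A_{I(x)}^T\ B^T]\left(\begin{bmatrix}A_{I(x)}\\ B\end{bmatrix}[A_{I(x)}^T\ B^T]\right)^{\dagger}\begin{bmatrix}A_{I(x)}\\ B\end{bmatrix}. \] Then $P_0\in\mathcal{P}(x)$.
   Context: $\Pi_D(x)$ denotes the Euclidean projection of $x$ onto $D$, $I_n$ the $n\times n$ identity, $N^\dagger$ the Moore–Penrose pseudo-inverse. For an index set $K\subseteq\{1,\dots,m\}$, $A_K$ is the submatrix of $A$ formed by the rows indexed by $K$, and $A_i$ is the $i$th row of $A$. Define $M(x)$ as the set of $(\lambda,\mu)\in\mathbb{R}^m\times\mathbb{R}^p$ such that $\Pi_D(x)-x+A^T\lambda+B^T\mu=0$, $A\Pi_D(x)-b\ge0$, $B\Pi_D(x)-d=0$, $\lambda\le0$, $\lambda^T(A\Pi_D(x)-b)=0$. Let $I(x):=\{i\in\{1,\dots,m\}\mid A_i\Pi_D(x)=b_i\}$. Let $\mathcal{D}(x)$ be the collection of index sets $K\subseteq\{1,\dots,m\}$ such that there exists $(\lambda,\mu)\in M(x)$ with $\mathrm{supp}(\lambda)\subseteq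 K\subseteq I(x)$ (where $\mathrm{supp}(\lambda)=\{i:\lambda_i\neq0\}$) and $[A_K^T\ B^T]$ has full column rank. Finally \[ \mathcal{P}(x):=\left\{I_n-[A_K^T\ B^T]\left(\begin{bmatrix}A_K\\ B\end{bmatrix}[A_K^T\ B^T]\right)^{-1}\begin{bmatrix}A_K\\ B\end{bmatrix}\ \middle|\ K\in\mathcal{D}(x)\right\}. \] *)

theory Defs
  imports "Jordan_Normal_Form.DL_Rank" "Jordan_Normal_Form.DL_Submatrix"
          "Jordan_Normal_Form.Gauss_Jordan_Elimination"
begin

(* Matrices/vectors are Jordan_Normal_Form 'real mat' / 'real vec'; indices are 0-based,
   so the row index set is {0..<m} instead of {1..m}. *)

definition pinv :: "real mat \<Rightarrow> real mat" where
  "pinv N = (THE X. X \<in> carrier_mat (dim_col N) (dim_row N) \<and>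
                   N * X * N = N \<and> X * N * X = X \<and>
                   transpose_mat (N * X) = N * X \<and> transpose_mat (X * N) = X * N)"

definition full_col_rank :: "real mat \<Rightarrow> bool" where
  "full_col_rank N \<longleftrightarrow> vec_space.rank (dim_row N) N = dim_col N"

definition polyD :: "nat \<Rightarrow> real mat \<Rightarrow> real vec \<Rightarrow> real mat \<Rightarrow> real vec \<Rightarrow> real vec set" where
  "polyD n A b B d = {y \<in> carrier_vec n. (\<forall>i<dim_row A. (A *\<^sub>v y) $ i \<ge> b $ i) \<and> B *\<^sub>v y = d}"

definition eproj :: "real vec set \<Rightarrow> real vec \<Rightarrow> real vec" where
  "eproj S x = (THE y. y \<in> S \<and> (\<forall>z\<in>S. (x - y) \<bullet> (x - y) \<le> (x - z) \<bullet> (x - z)))"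

definition rowsub :: "real mat \<Rightarrow> nat set \<Rightarrow> real mat" where
  "rowsub A K = submatrix A K UNIV"

definition multM :: "nat \<Rightarrow> real mat \<Rightarrow> real vec \<Rightarrow> real mat \<Rightarrow> real vec \<Rightarrow> real vec
                     \<Rightarrow> (real vec \<times> real vec) set" where
  "multM n A b B d x = (let y = eproj (polyD n A b B d) x in
     {(lam, mu). lam \<in> carrier_vec (dim_row A) \<and> mu \<in> carrier_vec (dim_row B) \<and>
        y - x + transpose_mat A *\<^sub>v lam + transpose_mat B *\<^sub>v mu = 0\<^sub>v n \<and>
        (\<forall>i<dim_row A. (A *\<^sub>v y) $ i \<ge> b $ i) \<and>
        B *\<^sub>v y = d \<and>
        (\<forall>i<dim_row A. lam $ i \<le> 0) \<and>
        lam \<bullet> (A *\<^sub>v y - b) = 0})"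

definition actI :: "nat \<Rightarrow> real mat \<Rightarrow> real vec \<Rightarrow> real mat \<Rightarrow> real vec \<Rightarrow> real vec \<Rightarrow> nat set" where
  "actI n A b B d x = {i. i < dim_row A \<and> row A i \<bullet> eproj (polyD n A b B d) x = b $ i}"

definition supp_vec :: "real vec \<Rightarrow> nat set" where
  "supp_vec v = {i. i < dim_vec v \<and> v $ i \<noteq> 0}"

definition idxD :: "nat \<Rightarrow> real mat \<Rightarrow> real vec \<Rightarrow> real mat \<Rightarrow> real vec \<Rightarrow> real vec \<Rightarrow> nat set set" where
  "idxD n A b B d x = {K. K \<subseteq> {0..<dim_row A} \<and>
      (\<exists>(lam, mu) \<in> multM n A b B d x. supp_vec lam \<subseteq> K \<and> K \<subseteq> actI n A b B d x) \<and>
      full_col_rank (transpose_mat (rowsub A K @\<^sub>r B))}"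

definition projP :: "nat \<Rightarrow> real mat \<Rightarrow> real vec \<Rightarrow> real mat \<Rightarrow> real vec \<Rightarrow> real vec \<Rightarrow> real mat set" where
  "projP n A b B d x = {1\<^sub>m n - transpose_mat (rowsub A K @\<^sub>r B)
          * the (mat_inverse ((rowsub A K @\<^sub>r B) * transpose_mat (rowsub A K @\<^sub>r B)))
          * (rowsub A K @\<^sub>r B) | K. K \<in> idxD n A b B d x}"

end

theory Submission
  imports Defs
begin


definition lc :: "nat \<Rightarrow> (nat \<Rightarrow> real vec) \<Rightarrow> (nat \<Rightarrow> real) \<Rightarrow> nat set \<Rightarrow> real vec" where
  "lc n a c S = vec n (\<lambda>j. \<Sum>i\<in>S. c i * a i $ j)"

lemma lc_carrier[simp]: "lc n a c S \<in> carrier_vec n"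
  unfolding lc_def by simp

lemma lc_dim[simp]: "dim_vec (lc n a c S) = n"
  unfolding lc_def by simp

lemma lc_scalar:
  assumes "finite S" "\<forall>i\<in>S. a i \<in> carrier_vec n" "y \<in> carrier_vec n"
  shows "lc n a c S \<bullet> y = (\<Sum>i\<in>S. c i * (a i \<bullet> y))"
proof -
  have "lc n a c S \<bullet> y = (\<Sum>j\<in>{0..<n}. (\<Sum>i\<in>S. c i * a i $ j) * y $ j)"
    unfolding scalar_prod_def lc_def using assms(3) by auto
  also have "\<dots> = (\<Sum>j\<in>{0..<n}. \<Sum>i\<in>S. c i * (a i $ j * y $ j))"
    by (simp add: sum_distrib_right mult.assoc)
  also have "\<dots> = (\<Sum>i\<in>S. \<Sum>j\<in>{0..<n}. c i * (a i $ j * y $ j))"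
    by (rule sum.swap)
  also have "\<dots> = (\<Sum>i\<in>S. c i * (a i \<bullet> y))"
    unfolding scalar_prod_def sum_distrib_left using assms(2,3) by auto
  finally show ?thesis .
qed

lemma lc_add: "lc n a c S + lc n a e S = lc n a (\<lambda>i. c i + e i) S"
  unfolding lc_def by (rule eq_vecI, auto simp: sum.distrib distrib_right)

lemma lc_smult: "t \<cdot>\<^sub>v lc n a c S = lc n a (\<lambda>i. t * c i) S"
  unfolding lc_def by (rule eq_vecI, auto simp: sum_distrib_left mult.assoc)

lemma lc_cong: "(\<And>i. i \<in> S \<Longrightarrow> c i = e i) \<Longrightarrow> lc n a c S = lc n a e S"
  unfolding lc_def by (rule eq_vecI, auto)

lemma lc_zero_outside: "finite S \<Longrightarrow> T \<subseteq> S \<Longrightarrow> (\<And>i. i \<in> S - T \<Longrightarrow> c i = 0) \<Longrightarrow> lc n a c S = lc n a c T"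
  unfolding lc_def by (rule eq_vecI, auto intro!: sum.mono_neutral_right)

lemma lc_insert: "finite S \<Longrightarrow> k \<notin> S \<Longrightarrow> a k \<in> carrier_vec n \<Longrightarrow>
   lc n a c (insert k S) = c k \<cdot>\<^sub>v a k + lc n a c S"
  unfolding lc_def by (rule eq_vecI, auto)

definition feas :: "nat \<Rightarrow> (nat \<Rightarrow> real vec) \<Rightarrow> (nat \<Rightarrow> real) \<Rightarrow> nat set \<Rightarrow> nat set \<Rightarrow> real vec \<Rightarrow> bool" where
  "feas n a \<beta> Ineq Eq y \<longleftrightarrow> y \<in> carrier_vec n \<and> (\<forall>i\<in>Ineq. \<beta> i \<le> a i \<bullet> y) \<and> (\<forall>i\<in>Eq. a i \<bullet> y = \<beta> i)"

definition kkt :: "nat \<Rightarrow> (nat \<Rightarrow> real vec) \<Rightarrow> (nat \<Rightarrow> real) \<Rightarrow> nat set \<Rightarrow> nat set \<Rightarrow> real vec \<Rightarrow> real vec \<Rightarrow> (nat \<Rightarrow> real) \<Rightarrow> bool" where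
  "kkt n a \<beta> Ineq Eq x y c \<longleftrightarrow> feas n a \<beta> Ineq Eq y \<and> x - y = lc n a c (Ineq \<union> Eq) \<and>
     (\<forall>i\<in>Ineq - Eq. c i \<le> 0 \<and> (c i \<noteq> 0 \<longrightarrow> a i \<bullet> y = \<beta> i))"

lemma kkt_vi:
  assumes fin: "finite Ineq" "finite Eq" and ac: "\<forall>i. a i \<in> carrier_vec n"
    and k: "kkt n a \<beta> Ineq Eq x y c" and z: "feas n a \<beta> Ineq Eq z"
  shows "(x - y) \<bullet> (z - y) \<le> 0"
proof -
  have y: "y \<in> carrier_vec n" and z': "z \<in> carrier_vec n" using k z unfolding kkt_def feas_def by auto
  have "(x - y) \<bullet> (z - y) = (\<Sum>i\<in>Ineq \<union> Eq. c i * (a i \<bullet> (z - y)))"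
    using k lc_scalar[of "Ineq \<union> Eq" a n "z - y" c] fin ac y z' unfolding kkt_def by auto
  also have "\<dots> \<le> 0"
  proof (rule sum_nonpos)
    fix i assume i: "i \<in> Ineq \<union> Eq"
    have e: "a i \<bullet> (z - y) = a i \<bullet> z - a i \<bullet> y" using ac y z' scalar_prod_minus_distrib[of "a i" n z y] by auto
    show "c i * (a i \<bullet> (z - y)) \<le> 0"
    proof (cases "i \<in> Eq")
      case True then show ?thesis using k z e unfolding kkt_def feas_def by auto
    next
      case False
      then have "i \<in> Ineq - Eq" using i by auto
      then have "c i \<le> 0" "c i \<noteq> 0 \<longrightarrow> a i \<bullet> y = \<beta> i" "\<beta> i \<le> a i \<bullet> z" using k z unfolding kkt_def feas_def by auto
      then show ?thesis using e by (cases "c i = 0") (auto simp: mult_nonpos_nonneg)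
    qed
  qed
  finally show ?thesis .
qed

lemma self_scalar_nonneg: "(v::real vec) \<bullet> v \<ge> 0"
  unfolding scalar_prod_def by (auto intro: sum_nonneg)

lemma self_scalar_zero: assumes "v \<in> carrier_vec n" "(v::real vec) \<bullet> v = 0" shows "v = 0\<^sub>v n"
proof (rule eq_vecI)
  have "(\<Sum>j\<in>{0..<n}. v $ j * v $ j) = 0" using assms unfolding scalar_prod_def by auto
  then have "\<forall>j\<in>{0..<n}. v $ j * v $ j = 0" by (subst (asm) sum_nonneg_eq_0_iff) auto
  then show "\<And>i. i < dim_vec (0\<^sub>v n) \<Longrightarrow> v $ i = 0\<^sub>v n $ i" by auto
  show "dim_vec v = dim_vec (0\<^sub>v n)" using assms by auto
qed

lemma self_scalar_pos: assumes "v \<in> carrier_vec n" "(v::real vec) \<noteq> 0\<^sub>v n" shows "v \<bullet> v > 0"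
  using self_scalar_nonneg[of v] self_scalar_zero[OF assms(1)] assms(2) by force

lemma vec_eq_comp: "v \<in> carrier_vec n \<Longrightarrow> w \<in> carrier_vec n \<Longrightarrow> (\<And>j. j < n \<Longrightarrow> v $ j = w $ j) \<Longrightarrow> v = w"
  by (rule eq_vecI) auto

lemma vec_eq_compD: "v = w \<Longrightarrow> v $ j = w $ j" by simp

lemma lc_comp: "j < n \<Longrightarrow> lc n a c S $ j = (\<Sum>i\<in>S. c i * a i $ j)"
  unfolding lc_def by simp

lemma zero_smult_add: "a \<in> carrier_vec n \<Longrightarrow> w \<in> carrier_vec n \<Longrightarrow> (0::real) \<cdot>\<^sub>v a + w = w"
  by (rule eq_vecI) auto

lemma eq_proj:
  assumes "finite Eq" and ac: "\<forall>i. a i \<in> carrier_vec n" and "x \<in> carrier_vec n"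
    and "feas n a \<beta> {} Eq q"
  shows "\<exists>y c. kkt n a \<beta> {} Eq x y c"
  using assms(1,3,4)
proof (induct Eq arbitrary: x rule: finite_induct)
  case empty
  show ?case
    by (rule exI[of _ x], rule exI[of _ "\<lambda>_. 0"]) (use empty in \<open>auto simp: kkt_def feas_def lc_def\<close>)
next
  case (insert k F)
  have q: "q \<in> carrier_vec n" and fq: "feas n a \<beta> {} F q" and qk: "a k \<bullet> q = \<beta> k"
    using insert(5) unfolding feas_def by auto
  have qa: "q + a k \<in> carrier_vec n" using q ac by auto
  obtain y1 c1 where k1: "kkt n a \<beta> {} F x y1 c1" using insert(3)[OF insert(4) fq] by blast
  obtain u e where k2: "kkt n a \<beta> {} F (q + a k) u e" using insert(3)[OF qa fq] by blast
  have y1: "y1 \<in> carrier_vec n" and u: "u \<in> carrier_vec n" using k1 k2 unfolding kkt_def feas_def by auto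
  have x: "x \<in> carrier_vec n" by fact
  have e1: "\<And>j. j < n \<Longrightarrow> x $ j - y1 $ j = (\<Sum>i\<in>F. c1 i * a i $ j)"
  proof -
    fix j assume j: "j < n"
    have "(x - y1) $ j = lc n a c1 F $ j" using k1 unfolding kkt_def by auto
    then show "x $ j - y1 $ j = (\<Sum>i\<in>F. c1 i * a i $ j)" using x y1 j by (simp add: lc_comp)
  qed
  have e2: "\<And>j. j < n \<Longrightarrow> q $ j + a k $ j - u $ j = (\<Sum>i\<in>F. e i * a i $ j)"
  proof -
    fix j assume j: "j < n"
    have "(q + a k - u) $ j = lc n a e F $ j" using k2 unfolding kkt_def by auto
    then show "q $ j + a k $ j - u $ j = (\<Sum>i\<in>F. e i * a i $ j)" using q u ac[rule_format, of k] j by (simp add: lc_comp)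
  qed
  have y1F: "\<forall>i\<in>F. a i \<bullet> y1 = \<beta> i" and uF: "\<forall>i\<in>F. a i \<bullet> u = \<beta> i" and qF: "\<forall>i\<in>F. a i \<bullet> q = \<beta> i"
    using k1 k2 fq unfolding kkt_def feas_def by auto
  define v where "v = u - q"
  have v: "v \<in> carrier_vec n" using u q v_def by auto
  have avF: "\<forall>i\<in>F. a i \<bullet> v = 0"
    using uF qF ac u q unfolding v_def by (auto simp: scalar_prod_minus_distrib[of _ n])
  have akv: "a k = v + lc n a e F"
  proof (rule vec_eq_comp[of _ n])
    fix j assume "j < n" then show "a k $ j = (v + lc n a e F) $ j"
      using e2[of j] q u unfolding v_def by (auto simp: lc_comp)
  qed (use ac v in auto)
  have "a k \<bullet> v = v \<bullet> v + lc n a e F \<bullet> v"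
    unfolding akv using v by (simp add: add_scalar_prod_distrib[of _ n])
  also have "lc n a e F \<bullet> v = 0"
    using lc_scalar[of F a n v e] insert(1) ac v avF by auto
  finally have akvv: "a k \<bullet> v = v \<bullet> v" by simp
  show ?case
  proof (cases "v = 0\<^sub>v n")
    case True
    then have ak: "a k = lc n a e F" using akv ac by auto
    have "a k \<bullet> y1 = (\<Sum>i\<in>F. e i * \<beta> i)"
      using lc_scalar[of F a n y1 e] insert(1) ac y1 y1F ak by auto
    moreover have "a k \<bullet> q = (\<Sum>i\<in>F. e i * \<beta> i)"
      using lc_scalar[of F a n q e] insert(1) ac q qF ak by auto
    ultimately have aky1: "a k \<bullet> y1 = \<beta> k" using qk by simp
    show ?thesis
    proof (intro exI)
      have "lc n a (c1(k := 0)) (insert k F) = 0 \<cdot>\<^sub>v a k + lc n a (c1(k := 0)) F"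
        using lc_insert[of F k a n "c1(k:=0)"] insert(1,2) ac by auto
      also have "lc n a (c1(k := 0)) F = lc n a c1 F"
        by (rule lc_cong) (use insert(2) in auto)
      finally have X: "lc n a (c1(k := 0)) (insert k F) = 0 \<cdot>\<^sub>v a k + lc n a c1 F" .
      have "lc n a (c1(k := 0)) (insert k F) = lc n a c1 F"
        unfolding X by (rule zero_smult_add) (use ac in auto)
      then show "kkt n a \<beta> {} (insert k F) x y1 (c1(k := 0))"
        using k1 aky1 unfolding kkt_def feas_def by auto
    qed
  next
    case False
    have vv: "v \<bullet> v > 0" using self_scalar_pos[OF v False] .
    define t where "t = (\<beta> k - a k \<bullet> y1) / (v \<bullet> v)"
    define y where "y = y1 + t \<cdot>\<^sub>v v"
    define c where "c = (\<lambda>i. if i = k then - t else c1 i + t * e i)"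
    have y: "y \<in> carrier_vec n" using y1 v y_def by auto
    have ay: "\<And>i. a i \<bullet> y = a i \<bullet> y1 + t * (a i \<bullet> v)"
      unfolding y_def using ac y1 v by (simp add: scalar_prod_add_distrib[of _ n])
    have fy: "feas n a \<beta> {} (insert k F) y"
      unfolding feas_def using y ay y1F avF akvv vv unfolding t_def by auto
    have lcc: "lc n a c (insert k F) = c k \<cdot>\<^sub>v a k + lc n a c F"
      using lc_insert insert(1,2) ac by blast
    have "x - y = lc n a c (insert k F)"
    proof (rule vec_eq_comp[of _ n])
      fix j assume j: "j < n"
      have "lc n a c F $ j = (\<Sum>i\<in>F. c1 i * a i $ j) + t * (\<Sum>i\<in>F. e i * a i $ j)"
      proof -
        have "lc n a c F $ j = (\<Sum>i\<in>F. c1 i * a i $ j + t * (e i * a i $ j))"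
          unfolding lc_comp[OF j] by (rule sum.cong) (use insert(2) in \<open>auto simp: c_def algebra_simps\<close>)
        then show ?thesis by (simp add: sum.distrib sum_distrib_left)
      qed
      then show "(x - y) $ j = lc n a c (insert k F) $ j"
      proof -
        have "(x - y) $ j = x $ j - y1 $ j - t * (u $ j - q $ j)" using j x y1 u q by (simp add: y_def v_def)
        moreover have "(c k \<cdot>\<^sub>v a k) $ j = - t * a k $ j" using j ac[rule_format, of k] by (simp add: c_def)
        moreover have "(c k \<cdot>\<^sub>v a k + lc n a c F) $ j = (c k \<cdot>\<^sub>v a k) $ j + lc n a c F $ j"
          using j by simp
        moreover have "t * a k $ j = t * (u $ j - q $ j) + t * (\<Sum>i\<in>F. e i * a i $ j)"
        proof -
          have "a k $ j = (u $ j - q $ j) + (\<Sum>i\<in>F. e i * a i $ j)" using e2[OF j] by linarith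
          then show ?thesis by (simp add: distrib_left)
        qed
        ultimately show ?thesis unfolding lcc using e1[OF j] \<open>lc n a c F $ j = _\<close>
          by linarith
      qed
    qed (use x y in auto)
    then show ?thesis using fy unfolding kkt_def by auto
  qed
qed

lemma quad_ident:
  assumes "x \<in> carrier_vec n" "y \<in> carrier_vec n" "z \<in> carrier_vec n"
  shows "(x - z) \<bullet> (y - z) + (x - y) \<bullet> (z - y) = ((y - z) \<bullet> (y - z) :: real)"
proof -
  have "(x - z) \<bullet> (y - z) + (x - y) \<bullet> (z - y) =
    (\<Sum>j\<in>{0..<n}. (x$j - z$j) * (y$j - z$j) + (x$j - y$j) * (z$j - y$j))"
    using assms unfolding scalar_prod_def by (simp add: sum.distrib)
  also have "\<dots> = (\<Sum>j\<in>{0..<n}. (y$j - z$j) * (y$j - z$j))"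
    by (rule sum.cong) (auto simp: algebra_simps)
  also have "\<dots> = (y - z) \<bullet> (y - z)" using assms unfolding scalar_prod_def by simp
  finally show ?thesis .
qed

lemma quad_ident2:
  assumes "x \<in> carrier_vec n" "y \<in> carrier_vec n" "z \<in> carrier_vec n"
  shows "(x - z) \<bullet> (x - z) = (x - y) \<bullet> (x - y) + (y - z) \<bullet> (y - z) - 2 * ((x - y) \<bullet> (z - y) :: real)"
proof -
  have "(x - z) \<bullet> (x - z) = (\<Sum>j\<in>{0..<n}. (x$j - z$j) * (x$j - z$j))"
    using assms unfolding scalar_prod_def by simp
  also have "\<dots> = (\<Sum>j\<in>{0..<n}. (x$j - y$j) * (x$j - y$j) + (y$j - z$j) * (y$j - z$j) - 2 * ((x$j - y$j) * (z$j - y$j)))"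
    by (rule sum.cong) (auto simp: algebra_simps)
  also have "\<dots> = (x - y) \<bullet> (x - y) + (y - z) \<bullet> (y - z) - 2 * ((x - y) \<bullet> (z - y))"
    using assms unfolding scalar_prod_def by (simp add: sum.distrib sum_subtractf sum_distrib_left)
  finally show ?thesis .
qed

lemma kkt_exists:
  assumes "finite Ineq" "finite Eq" and ac: "\<forall>i. a i \<in> carrier_vec n" and x: "x \<in> carrier_vec n"
    and "feas n a \<beta> Ineq Eq q"
  shows "\<exists>y c. kkt n a \<beta> Ineq Eq x y c"
  using assms(1,2,5)
proof (induct Ineq arbitrary: Eq q rule: finite_induct)
  case empty
  then show ?case using eq_proj[of Eq a n x \<beta> q] ac x by auto
next
  case (insert k F)
  have fq: "feas n a \<beta> F Eq q" and q: "q \<in> carrier_vec n" and qk: "\<beta> k \<le> a k \<bullet> q"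
    using insert(5) unfolding feas_def by auto
  obtain y' c' where k1: "kkt n a \<beta> F Eq x y' c'" using insert(3)[OF insert(4) fq] by blast
  have y': "y' \<in> carrier_vec n" using k1 unfolding kkt_def feas_def by auto
  show ?case
  proof (cases "\<beta> k \<le> a k \<bullet> y'")
    case True
    show ?thesis
    proof (cases "k \<in> Eq")
      case True
      then have "insert k F \<union> Eq = F \<union> Eq" "insert k F - Eq = F - Eq" by auto
      then show ?thesis using k1 \<open>\<beta> k \<le> a k \<bullet> y'\<close> unfolding kkt_def feas_def by auto
    next
      case False
      have s: "insert k F \<union> Eq = insert k (F \<union> Eq)" by auto
      have "lc n a (c'(k := 0)) (insert k F \<union> Eq) = 0 \<cdot>\<^sub>v a k + lc n a (c'(k := 0)) (F \<union> Eq)"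
        unfolding s using lc_insert[of "F \<union> Eq" k a n "c'(k:=0)"] insert(1,2,4) False ac by auto
      also have "lc n a (c'(k := 0)) (F \<union> Eq) = lc n a c' (F \<union> Eq)"
        by (rule lc_cong) (use insert(2) False in auto)
      finally have X: "lc n a (c'(k := 0)) (insert k F \<union> Eq) = 0 \<cdot>\<^sub>v a k + lc n a c' (F \<union> Eq)" .
      have "lc n a (c'(k := 0)) (insert k F \<union> Eq) = lc n a c' (F \<union> Eq)"
        unfolding X by (rule zero_smult_add) (use ac in auto)
      then have "kkt n a \<beta> (insert k F) Eq x y' (c'(k := 0))"
        using k1 \<open>\<beta> k \<le> a k \<bullet> y'\<close> unfolding kkt_def feas_def by auto
      then show ?thesis by blast
    qed
  next
    case False
    then have lt: "a k \<bullet> y' < \<beta> k" by simp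
    have kE: "k \<notin> Eq" using k1 lt unfolding kkt_def feas_def by auto
    define s where "s = (\<beta> k - a k \<bullet> y') / (a k \<bullet> q - a k \<bullet> y')"
    have s01: "0 < s" "s \<le> 1" using lt qk unfolding s_def by (auto simp: field_simps)
    define w where "w = y' + s \<cdot>\<^sub>v (q - y')"
    have w: "w \<in> carrier_vec n" using y' q w_def by auto
    have aw: "\<And>i. a i \<bullet> w = (1 - s) * (a i \<bullet> y') + s * (a i \<bullet> q)"
      unfolding w_def using ac y' q
      by (simp add: scalar_prod_add_distrib[of _ n] scalar_prod_minus_distrib[of _ n] algebra_simps)
    have fw: "feas n a \<beta> F (insert k Eq) w"
      unfolding feas_def
    proof (intro conjI ballI)
      fix i assume "i \<in> F"
      then have "\<beta> i \<le> a i \<bullet> y'" "\<beta> i \<le> a i \<bullet> q" using k1 fq unfolding kkt_def feas_def by auto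
      then have "(1 - s) * \<beta> i \<le> (1 - s) * (a i \<bullet> y')" "s * \<beta> i \<le> s * (a i \<bullet> q)"
        using s01 by (auto intro: mult_left_mono)
      then show "\<beta> i \<le> a i \<bullet> w" unfolding aw by (simp add: algebra_simps)
    next
      fix i assume "i \<in> insert k Eq"
      then show "a i \<bullet> w = \<beta> i"
      proof
        assume "i = k"
        have "a k \<bullet> q - a k \<bullet> y' \<noteq> 0" using lt qk by auto
        then have "s * (a k \<bullet> q - a k \<bullet> y') = \<beta> k - a k \<bullet> y'" unfolding s_def by simp
        then show ?thesis unfolding \<open>i = k\<close> aw by (simp add: algebra_simps)
      next
        assume "i \<in> Eq"
        then have "a i \<bullet> y' = \<beta> i" "a i \<bullet> q = \<beta> i" using k1 fq unfolding kkt_def feas_def by auto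
        then show ?thesis unfolding aw by (simp add: algebra_simps)
      qed
    qed (rule w)
    obtain y'' c'' where k2: "kkt n a \<beta> F (insert k Eq) x y'' c''"
      using insert(3)[OF _ fw] insert(4) by blast
    have y'': "y'' \<in> carrier_vec n" using k2 unfolding kkt_def feas_def by auto
    have set_eq: "insert k F \<union> Eq = F \<union> insert k Eq" by auto
    show ?thesis
    proof (cases "c'' k \<le> 0")
      case True
      have "kkt n a \<beta> (insert k F) Eq x y'' c''"
        using k2 True insert(2) unfolding kkt_def feas_def set_eq by auto
      then show ?thesis by blast
    next
      case False
      have fin: "finite (F \<union> insert k Eq)" using insert(1,4) by auto
      have "(x - y'') \<bullet> (y' - y'') = (\<Sum>i\<in>F \<union> insert k Eq. c'' i * (a i \<bullet> (y' - y'')))"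
        using k2 lc_scalar[OF fin, of a n "y' - y''" c''] ac y' y'' unfolding kkt_def by auto
      also have "\<dots> = c'' k * (a k \<bullet> (y' - y'')) + (\<Sum>i\<in>(F \<union> insert k Eq) - {k}. c'' i * (a i \<bullet> (y' - y'')))"
        by (subst sum.remove[OF fin, of k]) auto
      also have "\<dots> < 0"
      proof -
        have "a k \<bullet> (y' - y'') = a k \<bullet> y' - a k \<bullet> y''" using ac y' y'' by (simp add: scalar_prod_minus_distrib[of _ n])
        moreover have "a k \<bullet> y'' = \<beta> k" using k2 unfolding kkt_def feas_def by auto
        ultimately have "c'' k * (a k \<bullet> (y' - y'')) < 0" using False lt by (simp add: mult_pos_neg)
        moreover have "(\<Sum>i\<in>(F \<union> insert k Eq) - {k}. c'' i * (a i \<bullet> (y' - y''))) \<le> 0"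
        proof (rule sum_nonpos)
          fix i assume i: "i \<in> F \<union> insert k Eq - {k}"
          have e: "a i \<bullet> (y' - y'') = a i \<bullet> y' - a i \<bullet> y''" using ac y' y'' by (simp add: scalar_prod_minus_distrib[of _ n])
          show "c'' i * (a i \<bullet> (y' - y'')) \<le> 0"
          proof (cases "i \<in> Eq")
            case True
            then show ?thesis using k1 k2 e unfolding kkt_def feas_def by auto
          next
            case False
            then have iF: "i \<in> F - insert k Eq" using i by auto
            then have "c'' i \<le> 0" "c'' i \<noteq> 0 \<longrightarrow> a i \<bullet> y'' = \<beta> i" "\<beta> i \<le> a i \<bullet> y'"
              using k1 k2 unfolding kkt_def feas_def by auto
            then show ?thesis using e by (cases "c'' i = 0") (auto simp: mult_nonpos_nonneg)
          qed
        qed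
        ultimately show ?thesis by linarith
      qed
      finally have neg: "(x - y'') \<bullet> (y' - y'') < 0" .
      have fy'': "feas n a \<beta> F Eq y''" using k2 unfolding kkt_def feas_def by auto
      have "(x - y') \<bullet> (y'' - y') \<le> 0" using kkt_vi[OF insert(1,4) ac k1 fy''] .
      moreover have "(x - y'') \<bullet> (y' - y'') + (x - y') \<bullet> (y'' - y') = (y' - y'') \<bullet> (y' - y'')"
        using quad_ident[OF x y' y''] .
      moreover have "(y' - y'') \<bullet> (y' - y'') \<ge> 0" by (rule self_scalar_nonneg)
      ultimately show ?thesis using neg by linarith
    qed
  qed
qed

lemma kkt_unique_min:
  assumes "finite Ineq" "finite Eq" and ac: "\<forall>i. a i \<in> carrier_vec n" and x: "x \<in> carrier_vec n"
    and k: "kkt n a \<beta> Ineq Eq x y c"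
  shows "eproj {z. feas n a \<beta> Ineq Eq z} x = y"
  unfolding eproj_def
proof (rule the_equality)
  have y: "y \<in> carrier_vec n" using k unfolding kkt_def feas_def by auto
  have ineq: "(x - y) \<bullet> (x - y) + (y - z) \<bullet> (y - z) \<le> (x - z) \<bullet> (x - z)" if "feas n a \<beta> Ineq Eq z" for z
  proof -
    have z: "z \<in> carrier_vec n" using that unfolding feas_def by auto
    show ?thesis using quad_ident2[OF x y z] kkt_vi[OF assms(1,2) ac k that] by linarith
  qed
  show "y \<in> {z. feas n a \<beta> Ineq Eq z} \<and> (\<forall>z\<in>{z. feas n a \<beta> Ineq Eq z}. (x - y) \<bullet> (x - y) \<le> (x - z) \<bullet> (x - z))"
    using k ineq self_scalar_nonneg unfolding kkt_def
    by (smt (verit, best) mem_Collect_eq)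
  fix z assume "z \<in> {z. feas n a \<beta> Ineq Eq z} \<and> (\<forall>w\<in>{z. feas n a \<beta> Ineq Eq z}. (x - z) \<bullet> (x - z) \<le> (x - w) \<bullet> (x - w))"
  then have fz: "feas n a \<beta> Ineq Eq z" and le: "(x - z) \<bullet> (x - z) \<le> (x - y) \<bullet> (x - y)"
    using k unfolding kkt_def by auto
  have z: "z \<in> carrier_vec n" using fz unfolding feas_def by auto
  have "(y - z) \<bullet> (y - z) = 0" using ineq[OF fz] le self_scalar_nonneg[of "y - z"] by linarith
  then have "y - z = 0\<^sub>v n" using self_scalar_zero[of "y - z" n] y z by auto
  then show "z = y" using y z
    by (metis minus_cancel_vec right_zero_vec carrier_vecD eq_vecI index_minus_vec(1) index_zero_vec(1) eq_iff_diff_eq_0)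
qed

definition indep :: "nat \<Rightarrow> (nat \<Rightarrow> real vec) \<Rightarrow> nat set \<Rightarrow> bool" where
  "indep n a S \<longleftrightarrow> (\<forall>e. lc n a e S = 0\<^sub>v n \<longrightarrow> (\<forall>i\<in>S. e i = 0))"

lemma lc_uminus_zero: assumes "lc n a e S = 0\<^sub>v n" shows "lc n a (\<lambda>i. - e i) S = 0\<^sub>v n"
proof (rule vec_eq_comp[of _ n])
  fix j assume j: "j < n"
  have "lc n a e S $ j = 0" using assms j by simp
  then show "lc n a (\<lambda>i. - e i) S $ j = 0\<^sub>v n $ j" using j by (simp add: lc_comp sum_negf)
qed auto

lemma caratheodory:
  assumes fin: "finite Ineq" "finite Eq" and ac: "\<forall>i. a i \<in> carrier_vec n"
    and disj: "Ineq \<inter> Eq = {}" and indE: "indep n a Eq"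
    and k: "kkt n a \<beta> Ineq Eq x y c"
  shows "\<exists>c'. kkt n a \<beta> Ineq Eq x y c' \<and> indep n a ({i\<in>Ineq. c' i \<noteq> 0} \<union> Eq)"
  using k
proof (induct "card {i\<in>Ineq. c i \<noteq> 0}" arbitrary: c rule: less_induct)
  case less
  define T where "T = {i\<in>Ineq. c i \<noteq> 0}"
  have finT: "finite T" using fin unfolding T_def by auto
  show ?case
  proof (cases "indep n a (T \<union> Eq)")
    case True then show ?thesis using less(2) unfolding T_def by blast
  next
    case False
    then obtain e0 where e0: "lc n a e0 (T \<union> Eq) = 0\<^sub>v n" and nz: "\<exists>i\<in>T \<union> Eq. e0 i \<noteq> 0"
      unfolding indep_def by blast
    have "\<exists>i\<in>T. e0 i \<noteq> 0"
    proof (rule ccontr)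
      assume nn: "\<not> (\<exists>i\<in>T. e0 i \<noteq> 0)"
      then have "lc n a e0 (T \<union> Eq) = lc n a e0 Eq"
        by (intro lc_zero_outside) (use finT fin in auto)
      then have "\<forall>i\<in>Eq. e0 i = 0" using indE e0 unfolding indep_def by auto
      then show False using nz nn by auto
    qed
    then obtain e where e: "lc n a e (T \<union> Eq) = 0\<^sub>v n" and pos: "\<exists>i\<in>T. e i > 0"
    proof (cases "\<exists>i\<in>T. e0 i > 0")
      case True then show ?thesis using that e0 by blast
    next
      case False
      then have "\<exists>i\<in>T. - e0 i > 0" using \<open>\<exists>i\<in>T. e0 i \<noteq> 0\<close> by force
      then show ?thesis using that[of "\<lambda>i. - e0 i"] lc_uminus_zero[OF e0] by blast
    qed
    define P where "P = {i\<in>T. e i > 0}"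
    have finP: "finite P" "P \<noteq> {}" using finT pos unfolding P_def by auto
    define t where "t = Min ((\<lambda>i. - c i / e i) ` P)"
    have "t \<in> (\<lambda>i. - c i / e i) ` P" unfolding t_def using finP by (intro Min_in) auto
    then obtain i0 where i0: "i0 \<in> P" "t = - c i0 / e i0" by auto
    have tle: "\<And>i. i \<in> P \<Longrightarrow> t \<le> - c i / e i" unfolding t_def using finP by auto
    have cT: "\<And>i. i \<in> T \<Longrightarrow> c i < 0"
      using less(2) disj unfolding kkt_def T_def by force
    have tpos: "t > 0" using i0 cT[of i0] unfolding P_def by (auto simp: divide_neg_pos)
    define c' where "c' = (\<lambda>i. if i \<in> T \<union> Eq then c i + t * e i else c i)"
    have y: "y \<in> carrier_vec n" using less(2) unfolding kkt_def feas_def by auto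
    have lceq: "lc n a c' (Ineq \<union> Eq) = lc n a c (Ineq \<union> Eq)"
    proof -
      have "lc n a c' (Ineq \<union> Eq) = lc n a c' (T \<union> Eq)"
        by (rule lc_zero_outside) (use fin in \<open>auto simp: c'_def T_def\<close>)
      also have "\<dots> = lc n a c (T \<union> Eq)"
      proof (rule vec_eq_comp[of _ n])
        fix j assume j: "j < n"
        have "lc n a c' (T \<union> Eq) $ j = (\<Sum>i\<in>T \<union> Eq. c i * a i $ j + t * (e i * a i $ j))"
          unfolding lc_comp[OF j] by (rule sum.cong) (auto simp: c'_def algebra_simps)
        also have "\<dots> = lc n a c (T \<union> Eq) $ j + t * lc n a e (T \<union> Eq) $ j"
          unfolding lc_comp[OF j] by (simp add: sum.distrib sum_distrib_left)
        finally show "lc n a c' (T \<union> Eq) $ j = lc n a c (T \<union> Eq) $ j" using e j by simp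
      qed auto
      also have "\<dots> = lc n a c (Ineq \<union> Eq)"
        by (rule lc_zero_outside[symmetric]) (use fin in \<open>auto simp: T_def\<close>)
      finally show ?thesis .
    qed
    have k': "kkt n a \<beta> Ineq Eq x y c'"
      unfolding kkt_def
    proof (intro conjI ballI)
      show "feas n a \<beta> Ineq Eq y" using less(2) unfolding kkt_def by auto
      show "x - y = lc n a c' (Ineq \<union> Eq)" using less(2) lceq unfolding kkt_def by auto
      fix i assume i: "i \<in> Ineq - Eq"
      show "c' i \<le> 0"
      proof (cases "i \<in> T")
        case True
        show ?thesis
        proof (cases "e i > 0")
          case True
          then have "t \<le> - c i / e i" using tle \<open>i \<in> T\<close> unfolding P_def by auto
          then have "t * e i \<le> (- c i / e i) * e i" using True by (intro mult_right_mono) auto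
          then have "t * e i \<le> - c i" using True by simp
          then show ?thesis using \<open>i \<in> T\<close> unfolding c'_def by auto
        next
          case False
          then have "t * e i \<le> 0" using tpos by (simp add: mult_nonneg_nonpos)
          then show ?thesis using cT[OF \<open>i \<in> T\<close>] \<open>i \<in> T\<close> unfolding c'_def by auto
        qed
      next
        case False then show ?thesis using i unfolding c'_def T_def by auto
      qed
      show "c' i \<noteq> 0 \<longrightarrow> a i \<bullet> y = \<beta> i"
        using i less(2) unfolding c'_def T_def kkt_def by (auto split: if_splits)
    qed
    have sub: "{i\<in>Ineq. c' i \<noteq> 0} \<subseteq> T - {i0}"
    proof
      fix i assume i: "i \<in> {i\<in>Ineq. c' i \<noteq> 0}"
      then have "i \<notin> Eq" using disj by auto
      have "c' i0 = 0" using i0 unfolding c'_def P_def by auto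
      then show "i \<in> T - {i0}" using i \<open>i \<notin> Eq\<close> unfolding c'_def T_def by (auto split: if_splits)
    qed
    have "i0 \<in> T" using i0(1) unfolding P_def by blast
    then have "{i\<in>Ineq. c' i \<noteq> 0} \<subset> T" using sub by blast
    then have "card {i\<in>Ineq. c' i \<noteq> 0} < card T" by (rule psubset_card_mono[OF finT])
    then show ?thesis using less(1)[OF _ k'] unfolding T_def by blast
  qed
qed

lemma lc_single: assumes "finite S" "i \<in> S" "a i \<in> carrier_vec n"
  shows "lc n a (\<lambda>j. if j = i then 1 else 0) S = a i"
proof (rule vec_eq_comp[of _ n])
  fix l assume l: "l < n"
  show "lc n a (\<lambda>j. if j = i then 1 else 0) S $ l = a i $ l"
  proof -
    have "(\<Sum>j\<in>S. (if j = i then 1 else 0) * a j $ l) = (\<Sum>j\<in>S. if j = i then a j $ l else 0)"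
      by (rule sum.cong) auto
    also have "\<dots> = a i $ l" using assms by simp
    finally show ?thesis unfolding lc_comp[OF l] .
  qed
qed (use assms in auto)

lemma extend_indep:
  assumes finI: "finite I" and finE: "finite Eq" and ac: "\<forall>i. a i \<in> carrier_vec n"
    and T0: "T0 \<subseteq> I" and ind0: "indep n a (T0 \<union> Eq)" and disj: "I \<inter> Eq = {}"
  shows "\<exists>K. T0 \<subseteq> K \<and> K \<subseteq> I \<and> indep n a (K \<union> Eq) \<and> (\<forall>i\<in>I. \<exists>w. a i = lc n a w (K \<union> Eq))"
proof -
  obtain K where K: "finite K" "maximal K (\<lambda>K. K \<subseteq> I \<and> indep n a (K \<union> Eq))" "T0 \<subseteq> K"
    using maximal_exists_superset[of I "\<lambda>K. K \<subseteq> I \<and> indep n a (K \<union> Eq)" T0] finI T0 ind0 by blast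
  have KI: "K \<subseteq> I" and indK: "indep n a (K \<union> Eq)" using K(2) unfolding maximal_def by auto
  have finKE: "finite (K \<union> Eq)" using K(1) finE by auto
  have "\<forall>i\<in>I. \<exists>w. a i = lc n a w (K \<union> Eq)"
  proof
    fix i assume i: "i \<in> I"
    show "\<exists>w. a i = lc n a w (K \<union> Eq)"
    proof (cases "i \<in> K")
      case True
      then have "lc n a (\<lambda>j. if j = i then 1 else 0) (K \<union> Eq) = a i" using lc_single[OF finKE, of i a n] ac by auto
      then show ?thesis by metis
    next
      case False
      have iKE: "i \<notin> K \<union> Eq" using False disj i by auto
      have "\<not> indep n a (insert i K \<union> Eq)"
      proof
        assume "indep n a (insert i K \<union> Eq)"
        then have "insert i K = K" using K(2) KI i unfolding maximal_def by blast
        then show False using False by auto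
      qed
      then obtain e where e: "lc n a e (insert i (K \<union> Eq)) = 0\<^sub>v n" and nz: "\<exists>j\<in>insert i (K \<union> Eq). e j \<noteq> 0"
        unfolding indep_def by auto
      have lci: "lc n a e (insert i (K \<union> Eq)) = e i \<cdot>\<^sub>v a i + lc n a e (K \<union> Eq)"
        by (rule lc_insert[OF finKE iKE]) (use ac in auto)
      have ei: "e i \<noteq> 0"
      proof
        assume "e i = 0"
        then have "lc n a e (K \<union> Eq) = 0\<^sub>v n" using e lci zero_smult_add[of "a i" n "lc n a e (K \<union> Eq)"] ac by auto
        then have "\<forall>j\<in>K \<union> Eq. e j = 0" using indK unfolding indep_def by auto
        then show False using nz \<open>e i = 0\<close> by auto
      qed
      have "a i = lc n a (\<lambda>j. - e j / e i) (K \<union> Eq)"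
      proof (rule vec_eq_comp[of _ n])
        fix l assume l: "l < n"
        have "(e i \<cdot>\<^sub>v a i + lc n a e (K \<union> Eq)) $ l = 0" using e lci l by simp
        then have "e i * a i $ l + (\<Sum>j\<in>K \<union> Eq. e j * a j $ l) = 0" using l ac[rule_format, of i] by (simp add: lc_comp)
        then have "a i $ l = - (\<Sum>j\<in>K \<union> Eq. e j * a j $ l) / e i" using ei by (simp add: field_simps)
        also have "\<dots> = (\<Sum>j\<in>K \<union> Eq. - e j / e i * a j $ l)"
          by (simp add: sum_divide_distrib sum_negf)
        finally show "a i $ l = lc n a (\<lambda>j. - e j / e i) (K \<union> Eq) $ l" using l by (simp add: lc_comp)
      qed (use ac in auto)
      then show ?thesis by blast
    qed
  qed
  then show ?thesis using K(3) KI indK by blast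
qed



lemma rank_rows_indep:
  fixes B :: "real mat"
  assumes B: "B \<in> carrier_mat p n" and r: "vec_space.rank p B = p" and w: "w \<in> carrier_vec p"
    and z: "transpose_mat B *\<^sub>v w = 0\<^sub>v n"
  shows "w = 0\<^sub>v p"
proof -
  interpret vs: vec_space "TYPE(real)" p .
  obtain S where S: "finite S" "maximal S (\<lambda>T. T \<subseteq> set (cols B) \<and> vs.lin_indpt T)"
  proof -
    have "{} \<subseteq> carrier_vec p \<and> vs.lin_indpt {}"
      by (metis (no_types) empty_subsetI vs.fin_dim vs.finite_basis_exists vs.subset_li_is_li vec_vs vectorspace.basis_def)
    then show ?thesis using that maximal_exists_superset[of "set (cols B)" "\<lambda>T. T \<subseteq> set (cols B) \<and> vs.lin_indpt T" "{}"] by auto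
  qed
  have cardS: "card S = p" using vs.rank_card_indpt[OF B S(2)] r by simp
  have Ssub: "S \<subseteq> set (cols B)" and li: "vs.lin_indpt S" using S(2) unfolding maximal_def by auto
  have Sc: "S \<subseteq> carrier_vec p" using Ssub B cols_dim by blast
  have "vs.basis S"
    by (rule vs.dim_li_is_basis) (use S(1) Sc li cardS vs.dim_is_n in auto)
  then have spanS: "vs.span S = carrier_vec p" unfolding vs.basis_def by auto
  have "w \<in> vs.orthogonal_complement S"
    unfolding vs.orthogonal_complement_def
  proof (intro CollectI conjI ballI)
    fix y assume "y \<in> S"
    then obtain j where j: "j < n" "y = col B j" using Ssub B by (auto simp: cols_def)
    have "(transpose_mat B *\<^sub>v w) $ j = 0" using z j by simp
    then have "col B j \<bullet> w = 0" using j B by simp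
    then show "w \<bullet> y = 0" using j w B comm_scalar_prod[of w p "col B j"] by auto
  qed (rule w)
  then have "w \<in> vs.orthogonal_complement (vs.span S)" using Sc by simp
  then have "w \<bullet> w = 0" using w spanS unfolding vs.orthogonal_complement_def by auto
  then show ?thesis using self_scalar_zero[OF w] by simp
qed



definition ar :: "real mat \<Rightarrow> real mat \<Rightarrow> nat \<Rightarrow> nat \<Rightarrow> real vec" where
  "ar A B m i = (if i < m then row A i else row B (i - m))"

definition idx :: "nat \<Rightarrow> nat set \<Rightarrow> nat \<Rightarrow> nat" where
  "idx m K j = (if j < card K then pick K j else m + (j - card K))"

definition ridx :: "nat \<Rightarrow> nat set \<Rightarrow> nat \<Rightarrow> nat" where
  "ridx m K i = (if i < m then card {a\<in>K. a < i} else card K + (i - m))"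

lemma pick_UNIV: "pick UNIV j = j"
proof (induct j)
  case 0 then show ?case by (simp add: Least_eq_0)
next
  case (Suc j)
  have "(LEAST a. j < a) = Suc j" by (rule Least_equality) auto
  then show ?case using Suc by simp
qed

lemma idx_facts:
  assumes K: "K \<subseteq> {..<m}"
  shows "\<And>j. j < card K + p \<Longrightarrow> idx m K j \<in> K \<union> {m..<m+p}"
    and "\<And>j. j < card K + p \<Longrightarrow> ridx m K (idx m K j) = j"
    and "\<And>i. i \<in> K \<union> {m..<m+p} \<Longrightarrow> ridx m K i < card K + p"
    and "\<And>i. i \<in> K \<union> {m..<m+p} \<Longrightarrow> idx m K (ridx m K i) = i"
proof -
  have finK: "finite K" using K finite_subset by blast
  fix j assume j: "j < card K + p"
  show "idx m K j \<in> K \<union> {m..<m+p}"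
    using pick_in_set[of j K] j by (auto simp: idx_def)
  show "ridx m K (idx m K j) = j"
  proof (cases "j < card K")
    case True
    then have "pick K j \<in> K" using pick_in_set by blast
    then show ?thesis using True K card_pick[of j K] by (auto simp: idx_def ridx_def)
  next
    case False then show ?thesis by (auto simp: idx_def ridx_def)
  qed
next
  have finK: "finite K" using K finite_subset by blast
  fix i assume i: "i \<in> K \<union> {m..<m+p}"
  show "ridx m K i < card K + p"
  proof (cases "i \<in> K")
    case True
    have "{a\<in>K. a < i} \<subset> K" using True by auto
    then have "card {a\<in>K. a < i} < card K" using finK psubset_card_mono by blast
    then show ?thesis using True K by (auto simp: ridx_def)
  next
    case False then show ?thesis using i K by (auto simp: ridx_def)
  qed
  show "idx m K (ridx m K i) = i"
  proof (cases "i \<in> K")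
    case True
    have "{a\<in>K. a < i} \<subset> K" using True by auto
    then have "card {a\<in>K. a < i} < card K" using finK psubset_card_mono by blast
    then show ?thesis using True K pick_card_in_set[OF True] by (auto simp: ridx_def idx_def)
  next
    case False then show ?thesis using i K by (auto simp: ridx_def idx_def)
  qed
qed

lemma sum_idx:
  assumes K: "K \<subseteq> {..<m}"
  shows "(\<Sum>j\<in>{0..<card K + p}. f (idx m K j)) = (\<Sum>i\<in>K \<union> {m..<m+p}. f i)"
proof (rule sum.reindex_bij_witness[where i = "ridx m K" and j = "idx m K"])
  fix a assume "a \<in> {0..<card K + p}"
  then have a: "a < card K + p" by simp
  show "ridx m K (idx m K a) = a" by (rule idx_facts(2)[OF K a])
  show "idx m K a \<in> K \<union> {m..<m + p}" by (rule idx_facts(1)[OF K a])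
next
  fix b assume b: "b \<in> K \<union> {m..<m + p}"
  show "idx m K (ridx m K b) = b" by (rule idx_facts(4)[OF K b])
  show "ridx m K b \<in> {0..<card K + p}" using idx_facts(3)[OF K b] by simp
qed simp

lemma rowsub_carrier:
  assumes A: "A \<in> carrier_mat m n" and K: "K \<subseteq> {..<m}"
  shows "rowsub A K \<in> carrier_mat (card K) n"
proof -
  have e1: "{i. i < dim_row A \<and> i \<in> K} = K" using A K by auto
  have e2: "{j. j < dim_col A \<and> j \<in> UNIV} = {..<n}" using A by auto
  have "dim_row (rowsub A K) = card K" unfolding rowsub_def dim_submatrix(1) e1 ..
  moreover have "dim_col (rowsub A K) = n" unfolding rowsub_def dim_submatrix(2) e2 by simp
  ultimately show ?thesis by (rule carrier_matI)
qed

lemma R_carrier: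
  assumes A: "A \<in> carrier_mat m n" and B: "B \<in> carrier_mat p n" and K: "K \<subseteq> {..<m}"
  shows "rowsub A K @\<^sub>r B \<in> carrier_mat (card K + p) n"
  using rowsub_carrier[OF A K] B by auto

lemma append_rows_index:
  assumes A: "A \<in> carrier_mat n1 nc" and B: "B \<in> carrier_mat n2 nc" and i: "i < n1 + n2" and j: "j < nc"
  shows "(A @\<^sub>r B) $$ (i, j) = (if i < n1 then A $$ (i, j) else B $$ (i - n1, j))"
proof -
  have d: "dim_row A = n1" "dim_col A = nc" "dim_row B = n2" using A B by auto
  show ?thesis unfolding append_rows_def
    by (subst index_mat_four_block(1)) (simp_all add: d i j)
qed

lemma R_index:
  assumes A: "A \<in> carrier_mat m n" and B: "B \<in> carrier_mat p n" and K: "K \<subseteq> {..<m}"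
    and j: "j < card K + p" and l: "l < n"
  shows "(rowsub A K @\<^sub>r B) $$ (j, l) = ar A B m (idx m K j) $ l"
proof -
  have RK: "rowsub A K \<in> carrier_mat (card K) n" by (rule rowsub_carrier[OF A K])
  have c: "{i. i < dim_row A \<and> i \<in> K} = K" using A K by auto
  show ?thesis
  proof (cases "j < card K")
    case True
    have "pick K j \<in> K" using pick_in_set True by blast
    then have "pick K j < m" using K by auto
    moreover have "rowsub A K $$ (j, l) = A $$ (pick K j, l)"
      unfolding rowsub_def using submatrix_index[of j A K l UNIV] True l A c by (simp add: pick_UNIV)
    moreover have "A $$ (pick K j, l) = row A (pick K j) $ l" using A l \<open>pick K j < m\<close> by simp
    ultimately show ?thesis using append_rows_index[OF RK B j l] True by (simp add: ar_def idx_def)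
  next
    case False
    have "B $$ (j - card K, l) = row B (j - card K) $ l" using B j l False by simp
    moreover have "idx m K j = m + (j - card K)" using False by (simp add: idx_def)
    moreover have "ar A B m (m + (j - card K)) = row B (j - card K)"
      unfolding ar_def by (subst if_not_P) auto
    ultimately show ?thesis using append_rows_index[OF RK B j l] False by simp
  qed
qed

lemma ar_carrier:
  assumes A: "A \<in> carrier_mat m n" and B: "B \<in> carrier_mat p n"
  shows "\<forall>i. ar A B m i \<in> carrier_vec n"
  using A B by (auto simp: ar_def)

lemma RT_lc:
  assumes A: "A \<in> carrier_mat m n" and B: "B \<in> carrier_mat p n" and K: "K \<subseteq> {..<m}"
  shows "transpose_mat (rowsub A K @\<^sub>r B) *\<^sub>v vec (card K + p) (\<lambda>j. e (idx m K j))
        = lc n (ar A B m) e (K \<union> {m..<m+p})"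
proof (rule vec_eq_comp[of _ n])
  have R: "rowsub A K @\<^sub>r B \<in> carrier_mat (card K + p) n" by (rule R_carrier[OF A B K])
  fix l assume l: "l < n"
  have "(transpose_mat (rowsub A K @\<^sub>r B) *\<^sub>v vec (card K + p) (\<lambda>j. e (idx m K j))) $ l
     = (\<Sum>j\<in>{0..<card K + p}. (rowsub A K @\<^sub>r B) $$ (j, l) * e (idx m K j))"
    using R l by (simp add: mult_mat_vec_def scalar_prod_def)
  also have "\<dots> = (\<Sum>j\<in>{0..<card K + p}. e (idx m K j) * ar A B m (idx m K j) $ l)"
    by (rule sum.cong) (use R_index[OF A B K _ l] in auto)
  also have "\<dots> = (\<Sum>i\<in>K \<union> {m..<m+p}. e i * ar A B m i $ l)"
    by (rule sum_idx[OF K])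
  finally show "(transpose_mat (rowsub A K @\<^sub>r B) *\<^sub>v vec (card K + p) (\<lambda>j. e (idx m K j))) $ l
     = lc n (ar A B m) e (K \<union> {m..<m+p}) $ l" using l by (simp add: lc_comp)
qed (use R_carrier[OF A B K] in auto)

lemma R_mult:
  assumes A: "A \<in> carrier_mat m n" and B: "B \<in> carrier_mat p n" and K: "K \<subseteq> {..<m}"
    and j: "j < card K + p" and u: "u \<in> carrier_vec n"
  shows "((rowsub A K @\<^sub>r B) *\<^sub>v u) $ j = ar A B m (idx m K j) \<bullet> u"
proof -
  have R: "rowsub A K @\<^sub>r B \<in> carrier_mat (card K + p) n" by (rule R_carrier[OF A B K])
  have "((rowsub A K @\<^sub>r B) *\<^sub>v u) $ j = (\<Sum>l\<in>{0..<n}. (rowsub A K @\<^sub>r B) $$ (j, l) * u $ l)"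
    using R j u by (simp add: mult_mat_vec_def scalar_prod_def)
  also have "\<dots> = (\<Sum>l\<in>{0..<n}. ar A B m (idx m K j) $ l * u $ l)"
    by (rule sum.cong) (use R_index[OF A B K j] in auto)
  also have "\<dots> = ar A B m (idx m K j) \<bullet> u" using u by (simp add: scalar_prod_def)
  finally show ?thesis .
qed

lemma vec_ridx:
  assumes K: "K \<subseteq> {..<m}" and w: "w \<in> carrier_vec (card K + p)"
  shows "vec (card K + p) (\<lambda>j. (\<lambda>i. w $ ridx m K i) (idx m K j)) = w"
  by (rule eq_vecI) (use w idx_facts(2)[OF K] in auto)



lemma full_col_rank_of_inj:
  fixes M :: "real mat"
  assumes M: "M \<in> carrier_mat n r" and inj: "\<And>w. w \<in> carrier_vec r \<Longrightarrow> M *\<^sub>v w = 0\<^sub>v n \<Longrightarrow> w = 0\<^sub>v r"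
  shows "full_col_rank M"
proof -
  interpret vs: vec_space "TYPE(real)" n .
  have dist: "distinct (cols M)"
  proof (rule ccontr)
    assume "\<not> distinct (cols M)"
    then obtain j1 j2 where j: "j1 < r" "j2 < r" "j1 \<noteq> j2" "col M j1 = col M j2"
      using M by (auto simp: distinct_conv_nth)
    define w where "w = vec r (\<lambda>j. (if j = j1 then 1 else 0) - (if j = j2 then 1 else (0::real)))"
    have w: "w \<in> carrier_vec r" unfolding w_def by simp
    have "M *\<^sub>v w = 0\<^sub>v n"
    proof (rule vec_eq_comp[of _ n])
      fix l assume l: "l < n"
      have "(M *\<^sub>v w) $ l = (\<Sum>j\<in>{0..<r}. M $$ (l, j) * ((if j = j1 then 1 else 0) - (if j = j2 then 1 else 0)))"
        using M l unfolding w_def by (simp add: mult_mat_vec_def scalar_prod_def)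
      also have "\<dots> = (\<Sum>j\<in>{0..<r}. (if j = j1 then M $$ (l, j) else 0) - (if j = j2 then M $$ (l, j) else 0))"
        by (rule sum.cong) auto
      also have "\<dots> = (\<Sum>j\<in>{0..<r}. (if j = j1 then M $$ (l, j) else 0)) - (\<Sum>j\<in>{0..<r}. (if j = j2 then M $$ (l, j) else 0))"
        by (rule sum_subtractf)
      also have "\<dots> = M $$ (l, j1) - M $$ (l, j2)" using j by simp
      also have "\<dots> = 0"
      proof -
        have "col M j1 $ l = M $$ (l, j1)" by (rule index_col) (use M l j in auto)
        moreover have "col M j2 $ l = M $$ (l, j2)" by (rule index_col) (use M l j in auto)
        ultimately show ?thesis using j(4) by (metis diff_self)
      qed
      finally show "(M *\<^sub>v w) $ l = 0\<^sub>v n $ l" using l by simp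
    qed (use M w in auto)
    then have "w = 0\<^sub>v r" using inj w by blast
    then have "w $ j1 = 0" using j by simp
    then show False using j unfolding w_def by simp
  qed
  have li: "vs.lin_indpt (set (cols M))"
  proof
    assume "vs.lin_dep (set (cols M))"
    then obtain v where "v \<in> carrier_vec r" "v \<noteq> 0\<^sub>v r" "M *\<^sub>v v = 0\<^sub>v n"
      using vs.lin_depE[OF M _ dist] by blast
    then show False using inj by blast
  qed
  have "vs.rank M = r" by (rule vs.lin_indpt_full_rank[OF M dist li])
  then show ?thesis unfolding full_col_rank_def using M by simp
qed

lemma RT_inj:
  assumes A: "A \<in> carrier_mat m n" and B: "B \<in> carrier_mat p n" and K: "K \<subseteq> {..<m}"
    and ind: "indep n (ar A B m) (K \<union> {m..<m+p})"
    and w: "w \<in> carrier_vec (card K + p)" and z: "transpose_mat (rowsub A K @\<^sub>r B) *\<^sub>v w = 0\<^sub>v n"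
  shows "w = 0\<^sub>v (card K + p)"
proof -
  define e where "e = (\<lambda>i. w $ ridx m K i)"
  have "lc n (ar A B m) e (K \<union> {m..<m+p}) = 0\<^sub>v n"
    using RT_lc[OF A B K, of e] vec_ridx[OF K w] z unfolding e_def by simp
  then have "\<forall>i\<in>K \<union> {m..<m+p}. e i = 0" using ind unfolding indep_def by blast
  then show ?thesis
  proof (intro eq_vecI)
    fix j assume "j < dim_vec (0\<^sub>v (card K + p))"
    then have j: "j < card K + p" by simp
    have "e (idx m K j) = 0" using idx_facts(1)[OF K j] \<open>\<forall>i\<in>_. e i = 0\<close> by blast
    then show "w $ j = 0\<^sub>v (card K + p) $ j" using idx_facts(2)[OF K j] j unfolding e_def by simp
  qed (use w in simp)
qed

lemma indep_full_col_rank: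
  assumes A: "A \<in> carrier_mat m n" and B: "B \<in> carrier_mat p n" and K: "K \<subseteq> {..<m}"
    and ind: "indep n (ar A B m) (K \<union> {m..<m+p})"
  shows "full_col_rank (transpose_mat (rowsub A K @\<^sub>r B))"
proof (rule full_col_rank_of_inj[of _ n "card K + p"])
  show "transpose_mat (rowsub A K @\<^sub>r B) \<in> carrier_mat n (card K + p)" using R_carrier[OF A B K] by simp
  fix w assume "w \<in> carrier_vec (card K + p)" "transpose_mat (rowsub A K @\<^sub>r B) *\<^sub>v w = 0\<^sub>v n"
  then show "w = 0\<^sub>v (card K + p)" using RT_inj[OF A B K ind] by blast
qed

lemma B_indep:
  assumes A: "A \<in> carrier_mat m n" and B: "B \<in> carrier_mat p n" and r: "vec_space.rank p B = p"
  shows "indep n (ar A B m) {m..<m+p}"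
  unfolding indep_def
proof (intro allI impI ballI)
  fix e i assume z: "lc n (ar A B m) e {m..<m+p} = 0\<^sub>v n" and i: "i \<in> {m..<m+p}"
  define w where "w = vec p (\<lambda>k. e (m + k))"
  have "transpose_mat B *\<^sub>v w = 0\<^sub>v n"
  proof (rule vec_eq_comp[of _ n])
    fix l assume l: "l < n"
    have "(transpose_mat B *\<^sub>v w) $ l = (\<Sum>k\<in>{0..<p}. B $$ (k, l) * e (m + k))"
      using B l unfolding w_def by (simp add: mult_mat_vec_def scalar_prod_def)
    also have "\<dots> = (\<Sum>i\<in>{m..<m+p}. e i * ar A B m i $ l)"
    proof (rule sum.reindex_bij_witness[where i = "\<lambda>i. i - m" and j = "\<lambda>k. m + k"])
      fix k assume "k \<in> {0..<p}"
      then show "e (m + k) * ar A B m (m + k) $ l = B $$ (k, l) * e (m + k)"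
        using B l by (simp add: ar_def)
    qed auto
    also have "\<dots> = 0" using arg_cong[OF z, of "\<lambda>v. v $ l"] l by (simp add: lc_comp)
    finally show "(transpose_mat B *\<^sub>v w) $ l = 0\<^sub>v n $ l" using l by simp
  qed (use B w_def in auto)
  then have "w = 0\<^sub>v p" using rank_rows_indep[OF B r] unfolding w_def by simp
  moreover have "i - m < p" using i by auto
  ultimately have "w $ (i - m) = 0" by simp
  moreover have "w $ (i - m) = e i" using i \<open>i - m < p\<close> unfolding w_def by simp
  ultimately show "e i = 0" by simp
qed



lemma pinv_unique:
  fixes S X Y :: "real mat"
  assumes S: "S \<in> carrier_mat k k" and X: "X \<in> carrier_mat k k" and Y: "Y \<in> carrier_mat k k"
    and x1: "S * X * S = S" and x2: "X * S * X = X" and x3: "transpose_mat (S * X) = S * X" and x4: "transpose_mat (X * S) = X * S"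
    and y1: "S * Y * S = S" and y2: "Y * S * Y = Y" and y3: "transpose_mat (S * Y) = S * Y" and y4: "transpose_mat (Y * S) = Y * S"
  shows "X = Y"
proof -
  have c[simp]: "\<And>P Q. P \<in> carrier_mat k k \<Longrightarrow> Q \<in> carrier_mat k k \<Longrightarrow> P * Q \<in> carrier_mat k k" by auto
  have ct[simp]: "\<And>P. P \<in> carrier_mat k k \<Longrightarrow> transpose_mat P \<in> carrier_mat k k" by auto
  note as = assoc_mult_mat[of _ k k _ k _ k]
  note tm = transpose_mult[of _ k k _ k]
  have e1: "X = X * transpose_mat X * transpose_mat S"
  proof -
    have "X = X * (S * X)" using x2 X S by (simp add: as)
    also have "\<dots> = X * (transpose_mat X * transpose_mat S)" using x3 tm[OF S X] by simp
    finally show ?thesis using X S by (simp add: as)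
  qed
  have e2: "transpose_mat S = transpose_mat S * transpose_mat Y * transpose_mat S"
  proof -
    have "transpose_mat S = transpose_mat (S * Y * S)" using y1 by simp
    also have "\<dots> = transpose_mat S * transpose_mat (S * Y)" using tm[OF c[OF S Y] S] by simp
    also have "\<dots> = transpose_mat S * (transpose_mat Y * transpose_mat S)" using tm[OF S Y] by simp
    finally show ?thesis using S Y by (simp add: as)
  qed
  have "X = X * (transpose_mat X * transpose_mat S) * (transpose_mat Y * transpose_mat S)"
  proof -
    have "X = X * transpose_mat X * (transpose_mat S * transpose_mat Y * transpose_mat S)" using e1 e2 by metis
    then show ?thesis using X S Y by (simp add: as)
  qed
  also have "\<dots> = X * (S * X) * (S * Y)" using x3 y3 tm[OF S X] tm[OF S Y] by simp
  also have "\<dots> = (X * S * X) * S * Y" using X S Y by (simp add: as)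
  finally have ex: "X = X * S * Y" using x2 by simp
  have f1: "Y = transpose_mat S * transpose_mat Y * Y"
  proof -
    have "Y = (Y * S) * Y" using y2 by simp
    also have "\<dots> = (transpose_mat S * transpose_mat Y) * Y" using y4 tm[OF Y S] by simp
    finally show ?thesis .
  qed
  have f2: "transpose_mat S = transpose_mat S * transpose_mat X * transpose_mat S"
  proof -
    have "transpose_mat S = transpose_mat (S * X * S)" using x1 by simp
    also have "\<dots> = transpose_mat S * transpose_mat (S * X)" using tm[OF c[OF S X] S] by simp
    also have "\<dots> = transpose_mat S * (transpose_mat X * transpose_mat S)" using tm[OF S X] by simp
    finally show ?thesis using S X by (simp add: as)
  qed
  have "Y = (transpose_mat S * transpose_mat X) * (transpose_mat S * transpose_mat Y) * Y"
  proof -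
    have "Y = (transpose_mat S * transpose_mat X * transpose_mat S) * transpose_mat Y * Y" using f1 f2 by metis
    then show ?thesis using X S Y by (simp add: as)
  qed
  also have "\<dots> = (X * S) * (Y * S) * Y" using x4 y4 tm[OF X S] tm[OF Y S] by simp
  also have "\<dots> = X * S * (Y * S * Y)" using X S Y by (simp add: as)
  finally have ey: "Y = X * S * Y" using y2 by simp
  show ?thesis using ex ey by simp
qed

lemma pinv_eq:
  fixes S X :: "real mat"
  assumes S: "S \<in> carrier_mat k k" and X: "X \<in> carrier_mat k k"
    and x1: "S * X * S = S" and x2: "X * S * X = X" and x3: "transpose_mat (S * X) = S * X" and x4: "transpose_mat (X * S) = X * S"
  shows "pinv S = X"
  unfolding pinv_def
proof (rule the_equality)
  show "X \<in> carrier_mat (dim_col S) (dim_row S) \<and> S * X * S = S \<and> X * S * X = X \<and>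
    transpose_mat (S * X) = S * X \<and> transpose_mat (X * S) = X * S" using assms by auto
  fix Y assume "Y \<in> carrier_mat (dim_col S) (dim_row S) \<and> S * Y * S = S \<and> Y * S * Y = Y \<and>
    transpose_mat (S * Y) = S * Y \<and> transpose_mat (Y * S) = Y * S"
  then show "Y = X" using pinv_unique[OF S X, of Y] assms by auto
qed

lemma inv_of_inj:
  fixes G :: "real mat"
  assumes G: "G \<in> carrier_mat k k" and inj: "\<And>v. v \<in> carrier_vec k \<Longrightarrow> G *\<^sub>v v = 0\<^sub>v k \<Longrightarrow> v = 0\<^sub>v k"
  shows "\<exists>Gi. mat_inverse G = Some Gi \<and> G * Gi = 1\<^sub>m k \<and> Gi * G = 1\<^sub>m k \<and> Gi \<in> carrier_mat k k"
proof -
  have "det G \<noteq> 0" using det_0_iff_vec_prod_zero[OF G] inj by blast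
  then have "G \<in> Units (ring_mat TYPE(real) k (undefined::nat))" by (rule det_non_zero_imp_unit[OF G])
  then have "mat_inverse G \<noteq> None" using mat_inverse(1)[OF G, of "undefined::nat"] by blast
  then obtain Gi where "mat_inverse G = Some Gi" by auto
  then show ?thesis using mat_inverse(2)[OF G] by blast
qed

lemma gram_inj:
  fixes R :: "real mat"
  assumes R: "R \<in> carrier_mat r n" and inj: "\<And>w. w \<in> carrier_vec r \<Longrightarrow> transpose_mat R *\<^sub>v w = 0\<^sub>v n \<Longrightarrow> w = 0\<^sub>v r"
    and v: "v \<in> carrier_vec r" and z: "(R * transpose_mat R) *\<^sub>v v = 0\<^sub>v r"
  shows "v = 0\<^sub>v r"
proof -
  define u where "u = transpose_mat R *\<^sub>v v"
  have u: "u \<in> carrier_vec n" using R v u_def by auto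
  have "R *\<^sub>v u = 0\<^sub>v r" using z R v u_def by (simp add: assoc_mult_mat_vec[of _ r n _ r])
  then have "v \<bullet> (R *\<^sub>v u) = 0" using v by simp
  then have "u \<bullet> u = 0" using transpose_vec_mult_scalar[OF R u v] u_def by simp
  then have "u = 0\<^sub>v n" using self_scalar_zero[OF u] by simp
  then show ?thesis using inj[OF v] u_def by simp
qed

lemma sym_inv:
  fixes G Gi :: "real mat"
  assumes G: "G \<in> carrier_mat k k" and Gi: "Gi \<in> carrier_mat k k" and sym: "transpose_mat G = G"
    and i1: "G * Gi = 1\<^sub>m k" and i2: "Gi * G = 1\<^sub>m k"
  shows "transpose_mat Gi = Gi"
proof -
  have "transpose_mat Gi = transpose_mat Gi * (G * Gi)" using i1 Gi by simp
  also have "\<dots> = (transpose_mat Gi * transpose_mat G) * Gi" using G Gi sym by (simp add: assoc_mult_mat[of _ k k _ k _ k])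
  also have "transpose_mat Gi * transpose_mat G = transpose_mat (G * Gi)" using transpose_mult[OF G Gi] by simp
  also have "\<dots> = 1\<^sub>m k" using i1 by simp
  finally show ?thesis using Gi by simp
qed

lemma mat_eq_by_cols:
  assumes "P \<in> carrier_mat a b" "Q \<in> carrier_mat a b" "\<And>j. j < b \<Longrightarrow> col P j = col Q j"
  shows "P = Q"
proof (rule eq_matI)
  fix i j assume "i < dim_row Q" "j < dim_col Q"
  then have ij: "i < a" "j < b" using assms by auto
  have "col P j $ i = P $$ (i, j)" by (rule index_col) (use assms ij in auto)
  moreover have "col Q j $ i = Q $$ (i, j)" by (rule index_col) (use assms ij in auto)
  ultimately show "P $$ (i, j) = Q $$ (i, j)" using assms(3)[OF ij(2)] by metis
qed (use assms in auto)

lemma proj_eq: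
  fixes R N :: "real mat"
  assumes R: "R \<in> carrier_mat r n" and N: "N \<in> carrier_mat s n"
    and injR: "\<And>w. w \<in> carrier_vec r \<Longrightarrow> transpose_mat R *\<^sub>v w = 0\<^sub>v n \<Longrightarrow> w = 0\<^sub>v r"
    and rows: "\<And>j. j < s \<Longrightarrow> \<exists>w\<in>carrier_vec r. row N j = transpose_mat R *\<^sub>v w"
    and nul: "\<And>u. u \<in> carrier_vec n \<Longrightarrow> N *\<^sub>v u = 0\<^sub>v s \<Longrightarrow> R *\<^sub>v u = 0\<^sub>v r"
  shows "1\<^sub>m n - transpose_mat N * pinv (N * transpose_mat N) * N
       = 1\<^sub>m n - transpose_mat R * the (mat_inverse (R * transpose_mat R)) * R"
proof -
  define RT where "RT = transpose_mat R"
  define NT where "NT = transpose_mat N"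
  define G where "G = R * RT"
  have RT: "RT \<in> carrier_mat n r" and NT: "NT \<in> carrier_mat n s" using R N RT_def NT_def by auto
  have G: "G \<in> carrier_mat r r" using R RT G_def by auto
  have Ginj: "\<And>v. v \<in> carrier_vec r \<Longrightarrow> G *\<^sub>v v = 0\<^sub>v r \<Longrightarrow> v = 0\<^sub>v r"
    using gram_inj[OF R injR] unfolding G_def RT_def by blast
  obtain Gi where Gi0: "mat_inverse G = Some Gi" and GGi: "G * Gi = 1\<^sub>m r" and GiG: "Gi * G = 1\<^sub>m r"
    and Gi: "Gi \<in> carrier_mat r r"
    using inv_of_inj[OF G Ginj] by blast
  have symG: "transpose_mat G = G" unfolding G_def RT_def using transpose_mult[OF R, of "transpose_mat R" r] R by simp
  have symGi: "transpose_mat Gi = Gi" by (rule sym_inv[OF G Gi symG GGi GiG])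
  define Q where "Q = RT * (Gi * R)"
  have GiR: "Gi * R \<in> carrier_mat r n" using Gi R by simp
  have Q: "Q \<in> carrier_mat n n" using RT GiR Q_def by simp
  have QRT: "Q * RT = RT"
  proof -
    have "Q * RT = RT * ((Gi * R) * RT)" unfolding Q_def by (rule assoc_mult_mat[OF RT GiR RT])
    also have "(Gi * R) * RT = Gi * G" unfolding G_def by (rule assoc_mult_mat[OF Gi R RT])
    also have "\<dots> = 1\<^sub>m r" by (rule GiG)
    finally show ?thesis using right_mult_one_mat[OF RT] by simp
  qed
  have symQ: "transpose_mat Q = Q"
  proof -
    have "transpose_mat Q = transpose_mat (Gi * R) * transpose_mat RT"
      unfolding Q_def by (rule transpose_mult[OF RT GiR])
    also have "transpose_mat (Gi * R) = RT * Gi" unfolding RT_def using transpose_mult[OF Gi R] symGi by simp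
    also have "transpose_mat RT = R" unfolding RT_def by simp
    also have "RT * Gi * R = Q" unfolding Q_def by (rule assoc_mult_mat[OF RT Gi R])
    finally show ?thesis .
  qed
  have QNT: "Q * NT = NT"
  proof (rule mat_eq_by_cols[of _ n s])
    show "Q * NT \<in> carrier_mat n s" using Q NT by simp
    show "NT \<in> carrier_mat n s" by (rule NT)
    fix j assume j: "j < s"
    obtain w where w: "w \<in> carrier_vec r" and rw: "row N j = RT *\<^sub>v w" using rows[OF j] unfolding RT_def by blast
    have "col (Q * NT) j = Q *\<^sub>v col NT j" by (rule col_mult2[OF Q NT j])
    also have cN: "col NT j = row N j" unfolding NT_def using N j by simp
    also have "\<dots> = RT *\<^sub>v w" by (rule rw)
    also have "Q *\<^sub>v (RT *\<^sub>v w) = (Q * RT) *\<^sub>v w" using Q RT w by simp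
    also have "\<dots> = RT *\<^sub>v w" using QRT by simp
    finally show "col (Q * NT) j = col NT j" using rw cN by simp
  qed
  have NQ: "N * Q = N"
  proof -
    have "transpose_mat (N * Q) = transpose_mat Q * NT" unfolding NT_def by (rule transpose_mult[OF N Q])
    also have "\<dots> = NT" using symQ QNT by simp
    finally have "transpose_mat (transpose_mat (N * Q)) = transpose_mat NT" by simp
    then show ?thesis unfolding NT_def by simp
  qed
  define C where "C = N * (RT * Gi)"
  have RTGi: "RT * Gi \<in> carrier_mat n r" using RT Gi by simp
  have C: "C \<in> carrier_mat s r" using N RTGi C_def by simp
  have CR: "C * R = N"
  proof -
    have "C * R = N * ((RT * Gi) * R)" unfolding C_def by (rule assoc_mult_mat[OF N RTGi R])
    also have "(RT * Gi) * R = Q" unfolding Q_def by (rule assoc_mult_mat[OF RT Gi R])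
    finally show ?thesis using NQ by simp
  qed
  define CT where "CT = transpose_mat C"
  have CT: "CT \<in> carrier_mat r s" using C CT_def by simp
  have NTeq: "NT = RT * CT" unfolding NT_def RT_def CT_def using transpose_mult[OF C R] CR by simp
  have Cinj: "\<And>v. v \<in> carrier_vec r \<Longrightarrow> transpose_mat CT *\<^sub>v v = 0\<^sub>v s \<Longrightarrow> v = 0\<^sub>v r"
  proof -
    fix v assume v: "v \<in> carrier_vec r" and z: "transpose_mat CT *\<^sub>v v = 0\<^sub>v s"
    define zz where "zz = Gi *\<^sub>v v"
    have zz: "zz \<in> carrier_vec r" using Gi v zz_def by simp
    have RTz: "RT *\<^sub>v zz \<in> carrier_vec n" using RT zz by simp
    have "C *\<^sub>v v = N *\<^sub>v (RT *\<^sub>v zz)"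
      unfolding C_def zz_def using N RT Gi v by (simp add: assoc_mult_mat_vec[OF N RTGi v] assoc_mult_mat_vec[OF RT Gi v])
    then have "N *\<^sub>v (RT *\<^sub>v zz) = 0\<^sub>v s" using z unfolding CT_def by simp
    then have "R *\<^sub>v (RT *\<^sub>v zz) = 0\<^sub>v r" using nul[OF RTz] by simp
    then have "G *\<^sub>v zz = 0\<^sub>v r" unfolding G_def using assoc_mult_mat_vec[OF R RT zz] by simp
    then have "zz = 0\<^sub>v r" using Ginj[OF zz] by simp
    moreover have "v = G *\<^sub>v zz" unfolding zz_def using assoc_mult_mat_vec[OF G Gi v] GGi v by simp
    moreover have "G *\<^sub>v 0\<^sub>v r = 0\<^sub>v r"
      by (rule eq_vecI) (use G in \<open>auto simp: scalar_prod_def\<close>)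
    ultimately show "v = 0\<^sub>v r" by simp
  qed
  define CTC where "CTC = CT * C"
  have CTC: "CTC \<in> carrier_mat r r" using CT C CTC_def by simp
  have CTCinj: "\<And>v. v \<in> carrier_vec r \<Longrightarrow> CTC *\<^sub>v v = 0\<^sub>v r \<Longrightarrow> v = 0\<^sub>v r"
    using gram_inj[OF CT Cinj] unfolding CTC_def CT_def by simp
  obtain H where CH: "CTC * H = 1\<^sub>m r" and HC: "H * CTC = 1\<^sub>m r" and H: "H \<in> carrier_mat r r"
    using inv_of_inj[OF CTC CTCinj] by blast
  have symCTC: "transpose_mat CTC = CTC" unfolding CTC_def CT_def using transpose_mult[OF CT C] C by (simp add: CT_def)
  have symH: "transpose_mat H = H" by (rule sym_inv[OF CTC H symCTC CH HC])
  define P where "P = C * H"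
  define PT where "PT = H * CT"
  have P: "P \<in> carrier_mat s r" and PT: "PT \<in> carrier_mat r s" using C H CT P_def PT_def by auto
  have CTP: "CT * P = 1\<^sub>m r" unfolding P_def using assoc_mult_mat[OF CT C H] CH unfolding CTC_def by simp
  have PTC: "PT * C = 1\<^sub>m r" unfolding PT_def using assoc_mult_mat[OF H CT C] HC unfolding CTC_def by simp
  define S where "S = N * NT"
  define M where "M = C * PT"
  have M: "M \<in> carrier_mat s s" using C PT M_def by simp
  have GCT: "G * CT \<in> carrier_mat r s" using G CT by simp
  have S: "S \<in> carrier_mat s s" using N NT S_def by simp
  have Seq: "S = C * (G * CT)"
  proof -
    have "S = (C * R) * (RT * CT)" unfolding S_def using CR NTeq by simp
    also have "\<dots> = C * (R * (RT * CT))" using assoc_mult_mat[OF C R, of "RT * CT" s] RT CT by simp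
    also have "R * (RT * CT) = G * CT" unfolding G_def using assoc_mult_mat[OF R RT CT] by simp
    finally show ?thesis .
  qed
  define X where "X = P * (Gi * PT)"
  have GiPT: "Gi * PT \<in> carrier_mat r s" using Gi PT by simp
  have X: "X \<in> carrier_mat s s" using P GiPT X_def by simp
  have SX: "S * X = M"
  proof -
    have "S * X = C * (G * CT * X)" unfolding Seq by (rule assoc_mult_mat[OF C GCT X])
    also have "G * CT * X = G * (CT * X)" by (rule assoc_mult_mat[OF G CT X])
    also have "CT * X = (CT * P) * (Gi * PT)" unfolding X_def by (rule assoc_mult_mat[OF CT P GiPT, symmetric])
    also have "\<dots> = Gi * PT" using CTP left_mult_one_mat[OF GiPT] by simp
    also have "G * (Gi * PT) = (G * Gi) * PT" by (rule assoc_mult_mat[OF G Gi PT, symmetric])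
    also have "\<dots> = PT" using GGi left_mult_one_mat[OF PT] by simp
    finally show ?thesis unfolding M_def .
  qed
  have XS: "X * S = M"
  proof -
    have "X * S = P * (Gi * PT * S)" unfolding X_def by (rule assoc_mult_mat[OF P GiPT S])
    also have "Gi * PT * S = Gi * (PT * S)" by (rule assoc_mult_mat[OF Gi PT S])
    also have "PT * S = (PT * C) * (G * CT)" unfolding Seq by (rule assoc_mult_mat[OF PT C GCT, symmetric])
    also have "\<dots> = G * CT" using PTC left_mult_one_mat[OF GCT] by simp
    also have "Gi * (G * CT) = (Gi * G) * CT" by (rule assoc_mult_mat[OF Gi G CT, symmetric])
    also have "\<dots> = CT" using GiG left_mult_one_mat[OF CT] by simp
    also have "P * CT = C * PT" unfolding P_def PT_def by (rule assoc_mult_mat[OF C H CT])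
    finally show ?thesis unfolding M_def .
  qed
  have symM: "transpose_mat M = M"
  proof -
    have "transpose_mat M = transpose_mat PT * CT" unfolding M_def CT_def by (rule transpose_mult[OF C PT])
    also have "transpose_mat PT = C * H" unfolding PT_def CT_def using transpose_mult[OF H CT] symH C by (simp add: CT_def)
    also have "C * H * CT = M" unfolding M_def PT_def by (rule assoc_mult_mat[OF C H CT])
    finally show ?thesis .
  qed
  have SXS: "S * X * S = S"
  proof -
    have "S * X * S = C * (PT * S)" unfolding SX M_def by (rule assoc_mult_mat[OF C PT S])
    also have "PT * S = (PT * C) * (G * CT)" unfolding Seq by (rule assoc_mult_mat[OF PT C GCT, symmetric])
    also have "\<dots> = G * CT" using PTC left_mult_one_mat[OF GCT] by simp
    finally show ?thesis using Seq by simp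
  qed
  have XSX: "X * S * X = X"
  proof -
    have "X * S * X = P * (CT * X)"
      unfolding XS M_def using assoc_mult_mat[OF C H CT] assoc_mult_mat[OF P CT X] unfolding P_def PT_def by simp
    also have "CT * X = (CT * P) * (Gi * PT)" unfolding X_def by (rule assoc_mult_mat[OF CT P GiPT, symmetric])
    also have "\<dots> = Gi * PT" using CTP left_mult_one_mat[OF GiPT] by simp
    finally show ?thesis unfolding X_def .
  qed
  have pS: "pinv S = X" by (rule pinv_eq[OF S X SXS XSX]) (use SX XS symM in auto)
  have NXN: "NT * X * N = Q"
  proof -
    have "NT * X * N = RT * (CT * X * N)" unfolding NTeq
      using assoc_mult_mat[OF RT CT X] assoc_mult_mat[OF RT, of "CT * X" s N n] CT X N by simp
    also have "CT * X = Gi * PT"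
      unfolding X_def using assoc_mult_mat[OF CT P GiPT, symmetric] CTP left_mult_one_mat[OF GiPT] by simp
    also have "Gi * PT * N = Gi * (PT * N)" by (rule assoc_mult_mat[OF Gi PT N])
    also have "PT * N = R" unfolding CR[symmetric] using assoc_mult_mat[OF PT C R, symmetric] PTC left_mult_one_mat[OF R] by simp
    finally show ?thesis unfolding Q_def .
  qed
  have lhs: "transpose_mat N * pinv (N * transpose_mat N) * N = Q"
    using pS NXN unfolding S_def NT_def by simp
  have rhs: "transpose_mat R * the (mat_inverse (R * transpose_mat R)) * R = Q"
    using Gi0 assoc_mult_mat[OF RT Gi R] unfolding Q_def G_def RT_def by simp
  show ?thesis using lhs rhs by simp
qed



definition br :: "real vec \<Rightarrow> real vec \<Rightarrow> nat \<Rightarrow> nat \<Rightarrow> real" where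
  "br b d m i = (if i < m then b $ i else d $ (i - m))"

lemma row_R:
  assumes A: "A \<in> carrier_mat m n" and B: "B \<in> carrier_mat p n" and K: "K \<subseteq> {..<m}"
    and j: "j < card K + p"
  shows "row (rowsub A K @\<^sub>r B) j = ar A B m (idx m K j)"
proof (rule vec_eq_comp[of _ n])
  have R: "rowsub A K @\<^sub>r B \<in> carrier_mat (card K + p) n" by (rule R_carrier[OF A B K])
  show "row (rowsub A K @\<^sub>r B) j \<in> carrier_vec n" using R by (simp add: row_def)
  show "ar A B m (idx m K j) \<in> carrier_vec n" using ar_carrier[OF A B] by blast
  fix l assume l: "l < n"
  show "row (rowsub A K @\<^sub>r B) j $ l = ar A B m (idx m K j) $ l"
    using R_index[OF A B K j l] R j l by simp
qed

lemma polyD_feas: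
  assumes A: "A \<in> carrier_mat m n" and B: "B \<in> carrier_mat p n" and d: "d \<in> carrier_vec p"
  shows "polyD n A b B d = {z. feas n (ar A B m) (br b d m) {0..<m} {m..<m+p} z}"
proof (rule Set.set_eqI, rule iffI)
  fix z assume "z \<in> polyD n A b B d"
  then have z: "z \<in> carrier_vec n" and ge: "\<forall>i<m. b $ i \<le> (A *\<^sub>v z) $ i" and eq: "B *\<^sub>v z = d"
    using A unfolding polyD_def by auto
  show "z \<in> {z. feas n (ar A B m) (br b d m) {0..<m} {m..<m+p} z}"
    unfolding feas_def
  proof (intro CollectI conjI ballI)
    fix i assume "i \<in> {0..<m}"
    then show "br b d m i \<le> ar A B m i \<bullet> z" using ge A by (auto simp: ar_def br_def)
  next
    fix i assume i: "i \<in> {m..<m+p}"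
    then have "i - m < p" by auto
    then have "(B *\<^sub>v z) $ (i - m) = d $ (i - m)" using eq by simp
    then show "ar A B m i \<bullet> z = br b d m i" using i B \<open>i - m < p\<close> by (auto simp: ar_def br_def)
  qed (rule z)
next
  fix z assume "z \<in> {z. feas n (ar A B m) (br b d m) {0..<m} {m..<m+p} z}"
  then have z: "z \<in> carrier_vec n" and ge: "\<forall>i\<in>{0..<m}. br b d m i \<le> ar A B m i \<bullet> z"
    and eq: "\<forall>i\<in>{m..<m+p}. ar A B m i \<bullet> z = br b d m i" unfolding feas_def by auto
  have "B *\<^sub>v z = d"
  proof (rule vec_eq_comp[of _ p])
    fix k assume k: "k < p"
    have "ar A B m (m + k) \<bullet> z = br b d m (m + k)" using eq k by auto
    then show "(B *\<^sub>v z) $ k = d $ k" using B k by (simp add: ar_def br_def)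
  qed (use B d z in auto)
  moreover have "\<forall>i<dim_row A. b $ i \<le> (A *\<^sub>v z) $ i" using ge A by (auto simp: ar_def br_def)
  ultimately show "z \<in> polyD n A b B d" using z unfolding polyD_def by auto
qed

lemma sum_shift_m: "(\<Sum>i\<in>{m..<m+p}. f i) = (\<Sum>k\<in>{0..<p}. f ((m::nat) + k))"
  by (rule sum.reindex_bij_witness[where i = "\<lambda>k. m + k" and j = "\<lambda>i. i - m"]) auto

theorem theorem2p3:
  fixes m n p :: nat and A B :: "real mat" and b d x :: "real vec"
  assumes "A \<in> carrier_mat m n" and "B \<in> carrier_mat p n"
    and "vec_space.rank p B = p" and "p \<le> n"
    and "b \<in> carrier_vec m" and "d \<in> carrier_vec p"
    and "polyD n A b B d \<noteq> {}"
    and "x \<in> carrier_vec n"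
  shows "1\<^sub>m n - transpose_mat (rowsub A (actI n A b B d x) @\<^sub>r B)
           * pinv ((rowsub A (actI n A b B d x) @\<^sub>r B) * transpose_mat (rowsub A (actI n A b B d x) @\<^sub>r B))
           * (rowsub A (actI n A b B d x) @\<^sub>r B)
         \<in> projP n A b B d x"
proof -
  note A = assms(1) and B = assms(2) and rk = assms(3) and bc = assms(5) and dc = assms(6) and x = assms(8)
  define a where "a = ar A B m"
  define \<beta> where "\<beta> = br b d m"
  define Eq where "Eq = {m..<m+p}"
  have ac: "\<forall>i. a i \<in> carrier_vec n" unfolding a_def by (rule ar_carrier[OF A B])
  have pD: "polyD n A b B d = {z. feas n a \<beta> {0..<m} Eq z}"
    unfolding a_def \<beta>_def Eq_def by (rule polyD_feas[OF A B dc])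
  obtain q where q: "feas n a \<beta> {0..<m} Eq q" using assms(7) pD by auto
  have finE: "finite Eq" unfolding Eq_def by simp
  obtain y c0 where k0: "kkt n a \<beta> {0..<m} Eq x y c0"
    using kkt_exists[OF _ finE ac x q] by auto
  have indE: "indep n a Eq" unfolding a_def Eq_def by (rule B_indep[OF A B rk])
  have disj: "{0..<m} \<inter> Eq = {}" unfolding Eq_def by auto
  obtain c where kc: "kkt n a \<beta> {0..<m} Eq x y c" and indT: "indep n a ({i\<in>{0..<m}. c i \<noteq> 0} \<union> Eq)"
    using caratheodory[OF _ finE ac disj indE k0] by auto
  have ey: "eproj (polyD n A b B d) x = y"
    unfolding pD by (rule kkt_unique_min[OF _ finE ac x kc]) simp
  have fy: "feas n a \<beta> {0..<m} Eq y" using kc unfolding kkt_def by auto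
  have y: "y \<in> carrier_vec n" using fy unfolding feas_def by auto
  have yD: "y \<in> polyD n A b B d" using fy pD by auto
  define I where "I = actI n A b B d x"
  have Ieq: "I = {i. i < m \<and> row A i \<bullet> y = b $ i}" unfolding I_def actI_def ey using A by auto
  have IM: "I \<subseteq> {..<m}" and finI: "finite I" unfolding Ieq by auto
  have T0I: "{i\<in>{0..<m}. c i \<noteq> 0} \<subseteq> I"
  proof
    fix i assume i: "i \<in> {i\<in>{0..<m}. c i \<noteq> 0}"
    then have "i \<in> {0..<m} - Eq" unfolding Eq_def by auto
    then have "a i \<bullet> y = \<beta> i" using kc i unfolding kkt_def by auto
    then show "i \<in> I" using i unfolding Ieq a_def \<beta>_def ar_def br_def by auto
  qed
  have disjI: "I \<inter> Eq = {}" using IM unfolding Eq_def by auto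
  obtain K where K: "{i\<in>{0..<m}. c i \<noteq> 0} \<subseteq> K" "K \<subseteq> I" and indK: "indep n a (K \<union> Eq)"
    and span: "\<forall>i\<in>I. \<exists>w. a i = lc n a w (K \<union> Eq)"
    using extend_indep[OF finI finE ac T0I indT disjI] by blast
  have KM: "K \<subseteq> {..<m}" using K IM by auto
  define lam where "lam = vec m c"
  define mu where "mu = vec p (\<lambda>k. c (m + k))"
  have xy: "x - y = lc n a c ({0..<m} \<union> Eq)" using kc unfolding kkt_def by auto
  have mult: "(lam, mu) \<in> multM n A b B d x"
    unfolding multM_def Let_def ey
  proof (intro CollectI case_prodI conjI allI impI)
    show "lam \<in> carrier_vec (dim_row A)" "mu \<in> carrier_vec (dim_row B)" using A B lam_def mu_def by auto
    show "y - x + transpose_mat A *\<^sub>v lam + transpose_mat B *\<^sub>v mu = 0\<^sub>v n"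
    proof (rule vec_eq_comp[of _ n])
      show "y - x + transpose_mat A *\<^sub>v lam + transpose_mat B *\<^sub>v mu \<in> carrier_vec n" using A B y x unfolding carrier_vec_def by simp
      fix l assume l: "l < n"
      have "x $ l - y $ l = (\<Sum>i\<in>{0..<m} \<union> Eq. c i * a i $ l)"
        using arg_cong[OF xy, of "\<lambda>v. v $ l"] l x y by (simp add: lc_comp)
      also have "\<dots> = (\<Sum>i\<in>{0..<m}. c i * a i $ l) + (\<Sum>i\<in>Eq. c i * a i $ l)"
        by (rule sum.union_disjoint) (use disj finE in auto)
      also have "(\<Sum>i\<in>{0..<m}. c i * a i $ l) = (\<Sum>i\<in>{0..<m}. A $$ (i, l) * lam $ i)"
        by (rule sum.cong) (use A l in \<open>auto simp: a_def ar_def lam_def\<close>)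
      also have "(\<Sum>i\<in>Eq. c i * a i $ l) = (\<Sum>k\<in>{0..<p}. c (m + k) * a (m + k) $ l)"
        unfolding Eq_def by (rule sum_shift_m)
      also have "\<dots> = (\<Sum>k\<in>{0..<p}. B $$ (k, l) * mu $ k)"
        by (rule sum.cong) (use B l in \<open>auto simp: a_def ar_def mu_def\<close>)
      finally have e: "x $ l - y $ l = (\<Sum>i\<in>{0..<m}. A $$ (i, l) * lam $ i) + (\<Sum>k\<in>{0..<p}. B $$ (k, l) * mu $ k)" .
      have "(transpose_mat A *\<^sub>v lam) $ l = (\<Sum>i\<in>{0..<m}. A $$ (i, l) * lam $ i)"
        using A l lam_def by (simp add: mult_mat_vec_def scalar_prod_def)
      moreover have "(transpose_mat B *\<^sub>v mu) $ l = (\<Sum>k\<in>{0..<p}. B $$ (k, l) * mu $ k)"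
        using B l mu_def by (simp add: mult_mat_vec_def scalar_prod_def)
      ultimately show "(y - x + transpose_mat A *\<^sub>v lam + transpose_mat B *\<^sub>v mu) $ l = 0\<^sub>v n $ l"
        using e l A B x y by simp
    qed simp
    show "\<And>i. i < dim_row A \<Longrightarrow> b $ i \<le> (A *\<^sub>v y) $ i" "B *\<^sub>v y = d" using yD unfolding polyD_def by auto
    fix i assume i: "i < dim_row A"
    then have "i \<in> {0..<m} - Eq" using A unfolding Eq_def by auto
    then show "lam $ i \<le> 0" using kc i A unfolding kkt_def lam_def by auto
  next
    have "lam \<bullet> (A *\<^sub>v y - b) = (\<Sum>i\<in>{0..<m}. lam $ i * (A *\<^sub>v y - b) $ i)"
      using A bc y by (simp add: scalar_prod_def)
    also have "\<dots> = 0"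
    proof (rule sum.neutral, rule ballI)
      fix i assume i: "i \<in> {0..<m}"
      then have iE: "i \<in> {0..<m} - Eq" unfolding Eq_def by auto
      show "lam $ i * (A *\<^sub>v y - b) $ i = 0"
      proof (cases "c i = 0")
        case False
        then have "a i \<bullet> y = \<beta> i" using kc iE unfolding kkt_def by auto
        then have "(A *\<^sub>v y) $ i = b $ i" using i A unfolding a_def \<beta>_def ar_def br_def by auto
        then show ?thesis using i A bc y by simp
      qed (use i lam_def in simp)
    qed
    finally show "lam \<bullet> (A *\<^sub>v y - b) = 0" .
  qed
  have supp: "supp_vec lam \<subseteq> K" using K(1) unfolding supp_vec_def lam_def by auto
  have fcr: "full_col_rank (transpose_mat (rowsub A K @\<^sub>r B))"
    using indep_full_col_rank[OF A B KM] indK unfolding a_def Eq_def by simp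
  have KD: "K \<in> idxD n A b B d x"
    unfolding idxD_def
  proof (intro CollectI conjI)
    show "K \<subseteq> {0..<dim_row A}" using KM A by auto
    show "\<exists>(lam, mu)\<in>multM n A b B d x. supp_vec lam \<subseteq> K \<and> K \<subseteq> actI n A b B d x"
      using mult supp K(2) unfolding I_def by blast
  qed (rule fcr)
  define R where "R = rowsub A K @\<^sub>r B"
  define N where "N = rowsub A I @\<^sub>r B"
  have R: "R \<in> carrier_mat (card K + p) n" unfolding R_def by (rule R_carrier[OF A B KM])
  have N: "N \<in> carrier_mat (card I + p) n" unfolding N_def by (rule R_carrier[OF A B IM])
  have eqP: "1\<^sub>m n - transpose_mat N * pinv (N * transpose_mat N) * N
       = 1\<^sub>m n - transpose_mat R * the (mat_inverse (R * transpose_mat R)) * R"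
  proof (rule proj_eq[OF R N])
    fix w assume "w \<in> carrier_vec (card K + p)" "transpose_mat R *\<^sub>v w = 0\<^sub>v n"
    then show "w = 0\<^sub>v (card K + p)" using RT_inj[OF A B KM] indK unfolding R_def a_def Eq_def by blast
  next
    fix j assume j: "j < card I + p"
    have rj: "row N j = a (idx m I j)" unfolding N_def a_def by (rule row_R[OF A B IM j])
    have "idx m I j \<in> I \<union> Eq" using idx_facts(1)[OF IM j] unfolding Eq_def .
    then obtain w where w: "a (idx m I j) = lc n a w (K \<union> Eq)"
    proof
      assume "idx m I j \<in> I" then show ?thesis using span that by blast
    next
      assume e: "idx m I j \<in> Eq"
      have "lc n a (\<lambda>i. if i = idx m I j then 1 else 0) (K \<union> Eq) = a (idx m I j)"
        by (rule lc_single) (use e finE KM ac in \<open>auto intro: finite_subset\<close>)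
      then show ?thesis using that by metis
    qed
    have "transpose_mat R *\<^sub>v vec (card K + p) (\<lambda>j. w (idx m K j)) = lc n a w (K \<union> Eq)"
      unfolding R_def a_def Eq_def by (rule RT_lc[OF A B KM])
    then show "\<exists>w\<in>carrier_vec (card K + p). row N j = transpose_mat R *\<^sub>v w"
      using rj w by (intro bexI[of _ "vec (card K + p) (\<lambda>j. w (idx m K j))"]) auto
  next
    fix u assume u: "u \<in> carrier_vec n" and z: "N *\<^sub>v u = 0\<^sub>v (card I + p)"
    show "R *\<^sub>v u = 0\<^sub>v (card K + p)"
    proof (rule vec_eq_comp[of _ "card K + p"])
      show "R *\<^sub>v u \<in> carrier_vec (card K + p)" using R u by simp
      fix j assume j: "j < card K + p"
      define i where "i = idx m K j"
      have iK: "i \<in> K \<union> Eq" using idx_facts(1)[OF KM j] unfolding i_def Eq_def .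
      then have iI: "i \<in> I \<union> {m..<m+p}" using K(2) unfolding Eq_def by auto
      define j' where "j' = ridx m I i"
      have j': "j' < card I + p" "idx m I j' = i" using idx_facts(3,4)[OF IM iI] unfolding j'_def by auto
      have "(N *\<^sub>v u) $ j' = a i \<bullet> u" using R_mult[OF A B IM j'(1) u] j'(2) unfolding N_def a_def by simp
      then have "a i \<bullet> u = 0" using z j'(1) by simp
      moreover have "(R *\<^sub>v u) $ j = a i \<bullet> u" using R_mult[OF A B KM j u] unfolding R_def a_def i_def by simp
      ultimately show "(R *\<^sub>v u) $ j = 0\<^sub>v (card K + p) $ j" using j by simp
    qed simp
  qed
  show ?thesis
    unfolding projP_def using eqP KD unfolding R_def N_def I_def by blast
qed


end
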